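(* Let $x_a,x_b,l\in\mathbb{R}$ and $U=\{x\in C^1[a,b]: x(a)=x_a,\ x(b)=x_b\}$. Let $x$ be a local minimizer of $J(x)=\int_a^b L(t,x(t),{}^CD_{a+}^{\alpha,\rho}x(t))\,dt$ on $U$ subject to the constraint $I(x)=\int_a^b g(t,x(t),{}^CD_{a+}^{\alpha,\rho}x(t))\,dt=l$. If $x$ is not an extremal of $I$, then there exists $\lambda\in\mathbb{R}$ such that, with $K=L+\lambda g$, $$\partial_2K(t,x(t),{}^CD_{a+}^{\alpha,\rho} x(t))-D_{b-}^{\alpha,\rho}\big(\partial_3K(t,x(t),{}^CD_{a+}^{\alpha,\rho} x(t))\big)=0\quad\text{on }[a,b].$$
   Context: Fix $0<a<b<\infty$, $\alpha\in(0,1)$, $\rho>0$. For $x\in C^1[a,b]$, ${}^CD_{a+}^{\alpha,\rho} x(t)=\frac{\rho^\alpha}{\Gamma(1-\alpha)}\, t^{1-\rho}\frac{d}{dt}\int_a^t \frac{\tau^{\rho-1}}{(t^\rho-\tau^\rho)^\alpha}[x(\tau)-x(a)]\,d\tau=\frac{\rho^\alpha}{\Gamma(1-\alpha)}\int_a^t (t^\rho-\tau^\rho)^{-\alpha}x'(\tau)\,d\tau$. For a function $f$, $D_{b-}^{\alpha,\rho} f(t)=\frac{\rho^\alpha}{\Gamma(1-\alpha)}\frac{d}{dt}\int_t^b (\tau^\rho-t^\rho)^{-\alpha}f(\tau)\,d\tau$. $\partial_i$ denotes the partial derivative with respect to the $i$-th argument. Each of $L,g:[a,b]\times\mathbb{R}^2\to\mathbb{R}$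 is continuously differentiable with respect to its second and third arguments, and for every $x\in C^1[a,b]$ the maps $t\mapsto D_{b-}^{\alpha,\rho}(\partial_3L(t,x(t),{}^CD_{a+}^{\alpha,\rho}x(t)))$ and $t\mapsto D_{b-}^{\alpha,\rho}(\partial_3g(t,x(t),{}^CD_{a+}^{\alpha,\rho}x(t)))$ are continuous. "$x$ is an extremal of $I$" means $\partial_2g(t,x(t),{}^CD_{a+}^{\alpha,\rho}x(t))-D_{b-}^{\alpha,\rho}(\partial_3g(t,x(t),{}^CD_{a+}^{\alpha,\rho}x(t)))=0$ on $[a,b]$. $C^1[a,b]$ carries the norm $\|x\|=\max|x|+\max|{}^CD_{a+}^{\alpha,\rho}x|$, and local minimizers are taken with respect to this norm. *)

theory Defs
  imports "HOL-Analysis.Analysis"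
begin

definition C1_on :: "real \<Rightarrow> real \<Rightarrow> (real \<Rightarrow> real) \<Rightarrow> bool" where
  "C1_on a b x \<longleftrightarrow> (\<exists>x'. (\<forall>t\<in>{a..b}. (x has_real_derivative x' t) (at t within {a..b}))
      \<and> continuous_on {a..b} x')"

definition capD :: "real \<Rightarrow> real \<Rightarrow> real \<Rightarrow> real \<Rightarrow> (real \<Rightarrow> real) \<Rightarrow> real \<Rightarrow> real" where
  "capD \<alpha> \<rho> a b x t = \<rho> powr \<alpha> / Gamma (1 - \<alpha>) *
     integral {a..t} (\<lambda>\<tau>. (t powr \<rho> - \<tau> powr \<rho>) powr (-\<alpha>) * vector_derivative x (at \<tau> within {a..b}))"

definition rightD :: "real \<Rightarrow> real \<Rightarrow> real \<Rightarrow> real \<Rightarrow> (real \<Rightarrow> real) \<Rightarrow> real \<Rightarrow> real" where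
  "rightD \<alpha> \<rho> a b f t = \<rho> powr \<alpha> / Gamma (1 - \<alpha>) *
     vector_derivative (\<lambda>s. integral {s..b} (\<lambda>\<tau>. (\<tau> powr \<rho> - s powr \<rho>) powr (-\<alpha>) * f \<tau>))
       (at t within {a..b})"

definition rightD_exists_cont :: "real \<Rightarrow> real \<Rightarrow> real \<Rightarrow> real \<Rightarrow> (real \<Rightarrow> real) \<Rightarrow> bool" where
  "rightD_exists_cont \<alpha> \<rho> a b f \<longleftrightarrow>
     (\<forall>t\<in>{a..b}. (\<lambda>s. integral {s..b} (\<lambda>\<tau>. (\<tau> powr \<rho> - s powr \<rho>) powr (-\<alpha>) * f \<tau>))
        differentiable (at t within {a..b}))
     \<and> continuous_on {a..b} (rightD \<alpha> \<rho> a b f)"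

definition partial2 :: "(real \<Rightarrow> real \<Rightarrow> real \<Rightarrow> real) \<Rightarrow> real \<Rightarrow> real \<Rightarrow> real \<Rightarrow> real" where
  "partial2 F t u v = deriv (\<lambda>w. F t w v) u"

definition partial3 :: "(real \<Rightarrow> real \<Rightarrow> real \<Rightarrow> real) \<Rightarrow> real \<Rightarrow> real \<Rightarrow> real \<Rightarrow> real" where
  "partial3 F t u v = deriv (\<lambda>w. F t u w) v"

definition lagrangian_ok :: "real \<Rightarrow> real \<Rightarrow> real \<Rightarrow> real \<Rightarrow> (real \<Rightarrow> real \<Rightarrow> real \<Rightarrow> real) \<Rightarrow> bool" where
  "lagrangian_ok \<alpha> \<rho> a b F \<longleftrightarrow>
     continuous_on ({a..b} \<times> UNIV \<times> UNIV) (\<lambda>(t,u,v). F t u v)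
   \<and> (\<forall>t\<in>{a..b}. \<forall>u v. (\<lambda>w. F t w v) differentiable (at u) \<and> (\<lambda>w. F t u w) differentiable (at v))
   \<and> continuous_on ({a..b} \<times> UNIV \<times> UNIV) (\<lambda>(t,u,v). partial2 F t u v)
   \<and> continuous_on ({a..b} \<times> UNIV \<times> UNIV) (\<lambda>(t,u,v). partial3 F t u v)
   \<and> (\<forall>y. C1_on a b y \<longrightarrow>
        rightD_exists_cont \<alpha> \<rho> a b (\<lambda>t. partial3 F t (y t) (capD \<alpha> \<rho> a b y t)))"

definition functional :: "real \<Rightarrow> real \<Rightarrow> real \<Rightarrow> real \<Rightarrow> (real \<Rightarrow> real \<Rightarrow> real \<Rightarrow> real) \<Rightarrow> (real \<Rightarrow> real) \<Rightarrow> real" where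
  "functional \<alpha> \<rho> a b F y = integral {a..b} (\<lambda>t. F t (y t) (capD \<alpha> \<rho> a b y t))"

definition frac_norm :: "real \<Rightarrow> real \<Rightarrow> real \<Rightarrow> real \<Rightarrow> (real \<Rightarrow> real) \<Rightarrow> real" where
  "frac_norm \<alpha> \<rho> a b z = (SUP t\<in>{a..b}. \<bar>z t\<bar>) + (SUP t\<in>{a..b}. \<bar>capD \<alpha> \<rho> a b z t\<bar>)"

definition euler_lagrange :: "real \<Rightarrow> real \<Rightarrow> real \<Rightarrow> real \<Rightarrow> (real \<Rightarrow> real \<Rightarrow> real \<Rightarrow> real) \<Rightarrow> (real \<Rightarrow> real) \<Rightarrow> bool" where
  "euler_lagrange \<alpha> \<rho> a b F x \<longleftrightarrow> (\<forall>t\<in>{a..b}.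
     partial2 F t (x t) (capD \<alpha> \<rho> a b x t)
     - rightD \<alpha> \<rho> a b (\<lambda>s. partial3 F s (x s) (capD \<alpha> \<rho> a b x s)) t = 0)"

end

theory Submission
  imports Defs
begin


lemma pow_diff_lower:
  fixes a b t \<tau> \<rho> :: real
  assumes "0 < a" "a \<le> \<tau>" "\<tau> \<le> t" "t \<le> b" "0 < \<rho>"
  shows "\<rho> * min (a powr (\<rho>-1)) (b powr (\<rho>-1)) * (t-\<tau>) \<le> t powr \<rho> - \<tau> powr \<rho>"
proof (cases "\<tau> = t")
  case True then show ?thesis by simp
next
  case False
  then have lt: "\<tau> < t" using assms by simp
  have "\<And>z. \<tau> \<le> z \<and> z \<le> t \<Longrightarrow> ((\<lambda>z. z powr \<rho>) has_real_derivative \<rho> * z powr (\<rho>-1)) (at z)"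
    using assms by (intro has_real_derivative_powr) auto
  from MVT2[OF lt this] obtain z where z: "\<tau> < z" "z < t"
    "t powr \<rho> - \<tau> powr \<rho> = (t - \<tau>) * (\<rho> * z powr (\<rho>-1))" by blast
  have "min (a powr (\<rho>-1)) (b powr (\<rho>-1)) \<le> z powr (\<rho>-1)"
  proof (cases "\<rho> - 1 \<ge> 0")
    case True
    have "a powr (\<rho>-1) \<le> z powr (\<rho>-1)" using True z assms by (intro powr_mono2) auto
    then show ?thesis by simp
  next
    case False
    have "b powr (\<rho>-1) \<le> z powr (\<rho>-1)" using False z assms by (intro powr_mono2') auto
    then show ?thesis by simp
  qed
  then have "\<rho> * min (a powr (\<rho>-1)) (b powr (\<rho>-1)) * (t-\<tau>) \<le> \<rho> * z powr (\<rho>-1) * (t-\<tau>)"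
    using assms lt by (intro mult_right_mono mult_left_mono) auto
  then show ?thesis using z by (simp add: algebra_simps)
qed

lemma powneg_has_integral:
  fixes p q \<alpha> :: real
  assumes "0 < \<alpha>" "\<alpha> < 1" "p \<le> q"
  shows "((\<lambda>\<tau>. (\<tau> - p) powr (-\<alpha>)) has_integral ((q-p) powr (1-\<alpha>)/(1-\<alpha>))) {p..q}"
    and "((\<lambda>\<tau>. (q - \<tau>) powr (-\<alpha>)) has_integral ((q-p) powr (1-\<alpha>)/(1-\<alpha>))) {p..q}"
proof -
  have h: "((\<lambda>x. x powr (-\<alpha>)) has_integral ((q-p) powr (1-\<alpha>)/(1-\<alpha>))) (cbox 0 (q-p))"
    using has_integral_powr_from_0[of "-\<alpha>" "q-p"] assms by simp
  from has_integral_affinity'[OF h, of 1 "-p"]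
  show "((\<lambda>\<tau>. (\<tau> - p) powr (-\<alpha>)) has_integral ((q-p) powr (1-\<alpha>)/(1-\<alpha>))) {p..q}"
    by simp
  from has_integral_affinity'[OF h, of 1 "q"]
  have "((\<lambda>x. (x + q) powr (-\<alpha>)) has_integral ((q-p) powr (1-\<alpha>)/(1-\<alpha>))) {-q..-p}"
    by simp
  then have "((\<lambda>x. (-x + q) powr (-\<alpha>)) has_integral ((q-p) powr (1-\<alpha>)/(1-\<alpha>))) {-(-p)..-(-q)}"
    by (subst has_integral_reflect_real) simp
  then show "((\<lambda>\<tau>. (q - \<tau>) powr (-\<alpha>)) has_integral ((q-p) powr (1-\<alpha>)/(1-\<alpha>))) {p..q}"
    by simp
qed



lemma borel_lebesgue_on: "(f::real\<Rightarrow>real) \<in> borel_measurable borel \<Longrightarrow> f \<in> borel_measurable (lebesgue_on S)"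
  using measurable_completion measurable_lborel2 measurable_restrict_space1 by blast

definition kmin :: "real \<Rightarrow> real \<Rightarrow> real \<Rightarrow> real" where
  "kmin \<rho> a b = \<rho> * min (a powr (\<rho>-1)) (b powr (\<rho>-1))"

lemma kmin_pos: "0 < a \<Longrightarrow> 0 < b \<Longrightarrow> 0 < \<rho> \<Longrightarrow> 0 < kmin \<rho> a b"
  by (simp add: kmin_def)

lemma kernel_bound:
  fixes a b t \<tau> \<rho> \<alpha> :: real
  assumes "0 < a" "a \<le> \<tau>" "\<tau> \<le> t" "t \<le> b" "0 < \<rho>" "0 < \<alpha>"
  shows "(t powr \<rho> - \<tau> powr \<rho>) powr (-\<alpha>) \<le> kmin \<rho> a b powr (-\<alpha>) * (t - \<tau>) powr (-\<alpha>)"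
proof (cases "\<tau> = t")
  case True then show ?thesis by simp
next
  case False
  have m: "0 < kmin \<rho> a b" using assms by (intro kmin_pos) auto
  have pos: "0 < kmin \<rho> a b * (t - \<tau>)" using m False assms by simp
  have le: "kmin \<rho> a b * (t - \<tau>) \<le> t powr \<rho> - \<tau> powr \<rho>"
    using pow_diff_lower[OF assms(1-5)] by (simp add: kmin_def)
  have "(t powr \<rho> - \<tau> powr \<rho>) powr (-\<alpha>) \<le> (kmin \<rho> a b * (t - \<tau>)) powr (-\<alpha>)"
    using assms pos le by (intro powr_mono2') auto
  also have "\<dots> = kmin \<rho> a b powr (-\<alpha>) * (t - \<tau>) powr (-\<alpha>)"
    using m assms False by (simp add: powr_mult)
  finally show ?thesis .
qed

lemma kernel_bound2:
  fixes a b t \<tau> \<rho> \<alpha> :: real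
  assumes "0 < a" "a \<le> \<tau>" "\<tau> \<le> t" "t \<le> b" "0 < \<rho>" "0 < \<alpha>"
  shows "(t powr \<rho> - \<tau> powr \<rho>) powr (-\<alpha>) \<le> kmin \<rho> a b powr (-\<alpha>) * (t - \<tau>) powr (-\<alpha>)"
  using kernel_bound[OF assms] .

lemma kernel1_integrable:
  fixes a b p q \<rho> \<alpha> :: real
  assumes "0 < a" "a \<le> p" "p \<le> q" "q \<le> b" "0 < \<rho>" "0 < \<alpha>" "\<alpha> < 1"
  shows "(\<lambda>\<tau>. (q powr \<rho> - \<tau> powr \<rho>) powr (-\<alpha>)) absolutely_integrable_on {p..q}"
    and "integral {p..q} (\<lambda>\<tau>. (q powr \<rho> - \<tau> powr \<rho>) powr (-\<alpha>))
          \<le> kmin \<rho> a b powr (-\<alpha>) * ((q-p) powr (1-\<alpha>)/(1-\<alpha>))"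
proof -
  let ?k = "\<lambda>\<tau>. (q powr \<rho> - \<tau> powr \<rho>) powr (-\<alpha>)"
  let ?g = "\<lambda>\<tau>. kmin \<rho> a b powr (-\<alpha>) * (q - \<tau>) powr (-\<alpha>)"
  have gi: "(?g has_integral kmin \<rho> a b powr (-\<alpha>) * ((q-p) powr (1-\<alpha>)/(1-\<alpha>))) {p..q}"
    using powneg_has_integral(2)[of \<alpha> p q] assms by (intro has_integral_mult_right) auto
  have meas: "?k \<in> borel_measurable (lebesgue_on {p..q})"
    by (rule borel_lebesgue_on) measurable
  have bnd: "\<And>\<tau>. \<tau> \<in> {p..q} \<Longrightarrow> \<bar>?k \<tau>\<bar> \<le> ?g \<tau>"
    using kernel_bound assms by auto
  have ki: "?k integrable_on {p..q}"
    using measurable_bounded_by_integrable_imp_integrable_real[OF meas has_integral_integrable[OF gi] bnd] by simp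
  show "?k absolutely_integrable_on {p..q}"
    using absolutely_integrable_integrable_bound[OF _ ki, of ?g] bnd gi by auto
  show "integral {p..q} ?k \<le> kmin \<rho> a b powr (-\<alpha>) * ((q-p) powr (1-\<alpha>)/(1-\<alpha>))"
  proof -
    have "integral {p..q} ?k \<le> integral {p..q} ?g"
      using integral_le[OF ki has_integral_integrable[OF gi]] bnd by auto
    then show ?thesis using integral_unique[OF gi] by simp
  qed
qed

lemma kernel2_integrable:
  fixes a b p q \<rho> \<alpha> :: real
  assumes "0 < a" "a \<le> p" "p \<le> q" "q \<le> b" "0 < \<rho>" "0 < \<alpha>" "\<alpha> < 1"
  shows "(\<lambda>\<tau>. (\<tau> powr \<rho> - p powr \<rho>) powr (-\<alpha>)) absolutely_integrable_on {p..q}"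
proof -
  let ?k = "\<lambda>\<tau>. (\<tau> powr \<rho> - p powr \<rho>) powr (-\<alpha>)"
  let ?g = "\<lambda>\<tau>. kmin \<rho> a b powr (-\<alpha>) * (\<tau> - p) powr (-\<alpha>)"
  have gi: "(?g has_integral kmin \<rho> a b powr (-\<alpha>) * ((q-p) powr (1-\<alpha>)/(1-\<alpha>))) {p..q}"
    using powneg_has_integral(1)[of \<alpha> p q] assms by (intro has_integral_mult_right) auto
  have meas: "?k \<in> borel_measurable (lebesgue_on {p..q})"
    by (rule borel_lebesgue_on) measurable
  have bnd: "\<And>\<tau>. \<tau> \<in> {p..q} \<Longrightarrow> \<bar>?k \<tau>\<bar> \<le> ?g \<tau>"
    using kernel_bound assms by auto
  have ki: "?k integrable_on {p..q}"
    using measurable_bounded_by_integrable_imp_integrable_real[OF meas has_integral_integrable[OF gi] bnd] by simp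
  show "?k absolutely_integrable_on {p..q}"
    using absolutely_integrable_integrable_bound[OF _ ki, of ?g] bnd gi by auto
qed

lemma kernel_prod_integrable:
  fixes k h :: "real \<Rightarrow> real"
  assumes "k absolutely_integrable_on {p..q}" "continuous_on {p..q} h"
  shows "(\<lambda>\<tau>. k \<tau> * h \<tau>) absolutely_integrable_on {p..q}"
proof -
  have "(\<lambda>\<tau>. h \<tau> * k \<tau>) absolutely_integrable_on {p..q}"
    apply (rule absolutely_integrable_bounded_measurable_product_real)
    using assms apply (simp_all add: continuous_imp_measurable_on_sets_lebesgue)
    by (simp add: compact_continuous_image compact_imp_bounded)
  then show ?thesis by (simp add: mult.commute)
qed



lemma cont_bound_compact:
  fixes h :: "real \<Rightarrow> real"
  assumes "continuous_on {a..b} h"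
  obtains M where "M \<ge> 0" "\<And>t. t \<in> {a..b} \<Longrightarrow> \<bar>h t\<bar> \<le> M"
proof -
  have "bounded (h ` {a..b})" using assms compact_continuous_image compact_imp_bounded by blast
  then obtain M where "\<forall>x\<in>h ` {a..b}. norm x \<le> M" unfolding bounded_iff by blast
  then have "\<And>t. t \<in> {a..b} \<Longrightarrow> \<bar>h t\<bar> \<le> M" by auto
  then show ?thesis using that[of "max M 0"] by force
qed

lemma affine_in: "a \<le> u \<Longrightarrow> 0 \<le> s \<Longrightarrow> s \<le> (1::real) \<Longrightarrow> a \<le> a + s*(u-a) \<and> a + s*(u-a) \<le> u"
proof -
  assume h: "a \<le> u" "0 \<le> s" "s \<le> 1"
  have "s*(u-a) \<le> 1*(u-a)" using h by (intro mult_right_mono) auto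
  then show ?thesis using h by auto
qed

lemma frac_int_cont:
  fixes a b \<rho> \<alpha> :: real and h :: "real \<Rightarrow> real"
  assumes a: "0 < a" "a \<le> b" and p: "0 < \<rho>" "0 < \<alpha>" "\<alpha> < 1"
    and hc: "continuous_on {a..b} h"
  shows "continuous_on {a..b} (\<lambda>t. integral {a..t} (\<lambda>\<tau>. (t powr \<rho> - \<tau> powr \<rho>) powr (-\<alpha>) * h \<tau>))"
proof -
  obtain M where M: "M \<ge> 0" "\<And>t. t \<in> {a..b} \<Longrightarrow> \<bar>h t\<bar> \<le> M" using cont_bound_compact[OF hc] by blast
  define km where "km = kmin \<rho> a b powr (-\<alpha>)"
  have km: "km \<ge> 0" unfolding km_def by simp
  define g where "g t s = (t - a) * (((t powr \<rho> - (a + s*(t-a)) powr \<rho>) powr (-\<alpha>)) * h (a + s*(t-a)))" for t s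
  define F where "F t = integral {a..t} (\<lambda>\<tau>. (t powr \<rho> - \<tau> powr \<rho>) powr (-\<alpha>) * h \<tau>)" for t
  have step1: "(g t has_integral F t) {0..1}" if t: "t \<in> {a..b}" for t
  proof (cases "t = a")
    case True
    have "g a = (\<lambda>s. 0)" by (auto simp: g_def)
    then show ?thesis using True by (simp add: F_def)
  next
    case False
    then have ta: "t > a" using t by auto
    have hct: "continuous_on {a..t} h" using t by (intro continuous_on_subset[OF hc]) auto
    have ii: "(\<lambda>\<tau>. (t powr \<rho> - \<tau> powr \<rho>) powr (-\<alpha>) * h \<tau>) absolutely_integrable_on {a..t}"
      using kernel_prod_integrable[OF kernel1_integrable(1)[of a a t b \<rho> \<alpha>] hct] a p t by auto
    then have hi: "((\<lambda>\<tau>. (t powr \<rho> - \<tau> powr \<rho>) powr (-\<alpha>) * h \<tau>) has_integral F t) (cbox a t)"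
      unfolding F_def using set_lebesgue_integral_eq_integral(1) by (auto intro: integrable_integral)
    from has_integral_affinity'[OF hi, of "t-a" a] ta
    have "((\<lambda>s. (t powr \<rho> - ((t-a) * s + a) powr \<rho>) powr (-\<alpha>) * h ((t-a) * s + a)) has_integral F t / (t-a)) {0..1}"
      by (simp add: divide_simps)
    from has_integral_mult_right[OF this, of "t-a"] ta
    have "((\<lambda>s. (t-a) * ((t powr \<rho> - ((t-a) * s + a) powr \<rho>) powr (-\<alpha>) * h ((t-a) * s + a))) has_integral F t) {0..1}"
      by simp
    then show ?thesis unfolding g_def by (simp add: algebra_simps)
  qed
  have bnd: "\<bar>g t s\<bar> \<le> M * km * (t-a) powr (1-\<alpha>) * (1-s) powr (-\<alpha>)"
    if t: "t \<in> {a..b}" and s: "s \<in> {0..1}" for t s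
  proof (cases "t = a \<or> s = 1")
    case True then show ?thesis using M km by (auto simp: g_def)
  next
    case False
    then have ta: "t > a" and s1: "s < 1" using t s by auto
    have inn: "a \<le> a + s*(t-a)" "a + s*(t-a) \<le> t" using affine_in[of a t s] ta s by auto
    have e: "t - (a + s*(t-a)) = (1-s)*(t-a)" by (simp add: algebra_simps)
    have K: "(t powr \<rho> - (a + s*(t-a)) powr \<rho>) powr (-\<alpha>) \<le> km * ((1-s) powr (-\<alpha>) * (t-a) powr (-\<alpha>))"
      using kernel_bound[of a "a + s*(t-a)" t b \<rho> \<alpha>] a p inn t e s1 ta
      by (simp add: km_def powr_mult)
    have "\<bar>g t s\<bar> = (t-a) * ((t powr \<rho> - (a + s*(t-a)) powr \<rho>) powr (-\<alpha>) * \<bar>h (a + s*(t-a))\<bar>)"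
      using ta by (simp add: g_def abs_mult)
    also have "\<dots> \<le> (t-a) * ((km * ((1-s) powr (-\<alpha>) * (t-a) powr (-\<alpha>))) * M)"
      using K M(2)[of "a + s*(t-a)"] inn t ta km
      by (intro mult_left_mono mult_mono) auto
    also have "\<dots> = M * km * ((t-a) * (t-a) powr (-\<alpha>)) * (1-s) powr (-\<alpha>)" by (simp add: algebra_simps)
    also have "(t-a) * (t-a) powr (-\<alpha>) = (t-a) powr (1-\<alpha>)"
      using ta by (simp add: powr_diff powr_minus divide_simps)
    finally show ?thesis by simp
  qed
  define B where "B = M * km * (b-a) powr (1-\<alpha>)"
  have bnd2: "\<bar>g t s\<bar> \<le> B * (1-s) powr (-\<alpha>)" if t: "t \<in> {a..b}" and s: "s \<in> {0..1}" for t s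
  proof -
    have "(t-a) powr (1-\<alpha>) \<le> (b-a) powr (1-\<alpha>)" using t p by (intro powr_mono2) auto
    then have "M * km * (t-a) powr (1-\<alpha>) * (1-s) powr (-\<alpha>) \<le> B * (1-s) powr (-\<alpha>)"
      unfolding B_def using M km by (intro mult_right_mono mult_left_mono) auto
    then show ?thesis using bnd[OF t s] by simp
  qed
  have Bi: "(\<lambda>s. B * (1-s) powr (-\<alpha>)) integrable_on {0..1}"
  proof -
    have "(\<lambda>s. (1-s) powr (-\<alpha>)) integrable_on {0..1::real}"
      using powneg_has_integral(2)[of \<alpha> 0 1] p by (auto intro: has_integral_integrable)
    then show ?thesis using integrable_on_mult_right by blast
  qed
  have g1: "g u 1 = 0" for u by (simp add: g_def)
  have "continuous_on {a..b} F"
  proof (rule continuous_on_sequentiallyI)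
    fix x t assume xs: "\<forall>n. x n \<in> {a..b}" and t: "t \<in> {a..b}" and lim: "x \<longlonglongrightarrow> t"
    have conv: "(\<lambda>k. g (x k) s) \<longlonglongrightarrow> g t s" if s: "s \<in> {0..1}" for s
    proof (cases "s = 1")
      case True then show ?thesis by (simp add: g1)
    next
      case False
      then have s1: "s < 1" using s by auto
      show ?thesis
      proof (cases "t = a")
        case True
        have g0: "g t s = 0" using True by (simp add: g_def)
        have "(\<lambda>k. M * km * (x k - a) powr (1-\<alpha>) * (1-s) powr (-\<alpha>)) \<longlonglongrightarrow> 0"
        proof -
          have "(\<lambda>k. x k - a) \<longlonglongrightarrow> 0" using lim True by (auto intro!: tendsto_eq_intros)
          then have "(\<lambda>k. (x k - a) powr (1-\<alpha>)) \<longlonglongrightarrow> 0"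
            apply (rule tendsto_zero_powrI[OF _ tendsto_const])
            using xs p by auto
          from tendsto_mult_right_zero[OF tendsto_mult_left_zero[OF this], of "M*km" "(1-s) powr (-\<alpha>)"]
          show ?thesis by (simp only: mult.assoc)
        qed
        note n1 = this
        have n2: "\<forall>\<^sub>F k in sequentially. norm (g (x k) s) \<le> M * km * (x k - a) powr (1-\<alpha>) * (1-s) powr (-\<alpha>)"
          using bnd xs s by (intro always_eventually) simp
        have "(\<lambda>k. g (x k) s) \<longlonglongrightarrow> 0"
          using Lim_null_comparison[OF n2 n1] by simp
        then show ?thesis using g0 by simp
      next
        case False
        then have ta: "t > a" using t by auto
        have sl: "s*(t-a) < t-a" using mult_strict_right_mono[of s 1 "t-a"] s1 ta by simp
        have i1: "a \<le> a + s*(t-a)" using affine_in[of a t s] ta s by auto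
        have i2: "a + s*(t-a) < t" using sl by linarith
        note inn = i1 i2
        have pos: "t powr \<rho> - (a + s*(t-a)) powr \<rho> \<noteq> 0"
        proof -
          have "(a + s*(t-a)) powr \<rho> < t powr \<rho>"
            using i1 i2 a(1) p(1) by (intro powr_less_mono2) auto
          then show ?thesis by simp
        qed
        have inab: "a + s*(u-a) \<in> {a..b}" if "u \<in> {a..b}" for u
          using affine_in[of a u s] that s by auto
        have xl: "(\<lambda>k. a + s*(x k - a)) \<longlonglongrightarrow> a + s*(t-a)"
          by (intro tendsto_add tendsto_mult tendsto_diff lim tendsto_const)
        have hl: "(\<lambda>k. h (a + s*(x k - a))) \<longlonglongrightarrow> h (a + s*(t-a))"
          by (rule continuous_on_tendsto_compose[OF hc xl]) (use xs inab t in auto)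
        have p1: "(\<lambda>k. x k powr \<rho>) \<longlonglongrightarrow> t powr \<rho>"
          by (rule tendsto_powr[OF lim tendsto_const]) (use ta a in auto)
        have p2: "(\<lambda>k. (a + s*(x k - a)) powr \<rho>) \<longlonglongrightarrow> (a + s*(t-a)) powr \<rho>"
          by (rule tendsto_powr[OF xl tendsto_const]) (use i1 a in auto)
        have pl: "(\<lambda>k. (x k powr \<rho> - (a + s*(x k-a)) powr \<rho>) powr (-\<alpha>)) \<longlonglongrightarrow> (t powr \<rho> - (a + s*(t-a)) powr \<rho>) powr (-\<alpha>)"
          by (rule tendsto_powr[OF tendsto_diff[OF p1 p2] tendsto_const pos])
        have "(\<lambda>k. (x k - a) * (((x k powr \<rho> - (a + s*(x k-a)) powr \<rho>) powr (-\<alpha>)) * h (a + s*(x k - a))))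
           \<longlonglongrightarrow> (t - a) * (((t powr \<rho> - (a + s*(t-a)) powr \<rho>) powr (-\<alpha>)) * h (a + s*(t-a)))"
          by (intro tendsto_mult pl hl tendsto_diff lim tendsto_const)
        then show ?thesis unfolding g_def .
      qed
    qed
    have dc: "(\<lambda>k. integral {0..1} (g (x k))) \<longlonglongrightarrow> integral {0..1} (g t)"
    proof -
      have fi: "\<And>k. g (x k) integrable_on {0..1}" using step1 xs has_integral_integrable by blast
      have le: "\<And>k s. s \<in> {0..1} \<Longrightarrow> norm (g (x k) s) \<le> B*(1-s) powr (-\<alpha>)"
        using bnd2 xs by simp
      show ?thesis by (rule dominated_convergence(2)[OF fi Bi le conv])
    qed
    have "F (x n) = integral {0..1} (g (x n))" for n using step1 xs integral_unique by metis
    moreover have "F t = integral {0..1} (g t)" using step1 t integral_unique by metis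
    ultimately show "(\<lambda>n. F (x n)) \<longlonglongrightarrow> F t" using dc by simp
  qed
  then show ?thesis unfolding F_def .
qed



lemma HL2:
  fixes g :: "real \<Rightarrow> real"
  assumes "integrable lborel (\<lambda>x. indicator S x * g x)"
  shows "(g has_integral (LINT x|lborel. indicator S x * g x)) S"
proof -
  have "((\<lambda>x. indicator S x * g x) has_integral (LINT x|lborel. indicator S x * g x)) UNIV"
    using has_integral_integral_lborel[OF assms] .
  moreover have "(\<lambda>x. indicator S x * g x) = (\<lambda>x. if x \<in> S then g x else 0)"
    by (auto simp: indicator_def)
  ultimately show ?thesis using has_integral_restrict_UNIV by metis
qed

lemma HL1:
  fixes g :: "real \<Rightarrow> real"
  assumes "g absolutely_integrable_on S" "(\<lambda>x. indicator S x * g x) \<in> borel_measurable borel"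
  shows "integrable lborel (\<lambda>x. indicator S x * g x)"
    and "(LINT x|lborel. indicator S x * g x) = integral S g"
proof -
  have "integrable lebesgue (\<lambda>x. indicator S x * g x)"
    using assms(1) unfolding set_integrable_def by simp
  then show i: "integrable lborel (\<lambda>x. indicator S x * g x)"
  proof -
    have m: "(\<lambda>x. indicator S x * g x) \<in> borel_measurable lborel" using assms(2) by simp
    show ?thesis using integrable_completion[OF m] \<open>integrable lebesgue _\<close> by simp
  qed
  show "(LINT x|lborel. indicator S x * g x) = integral S g"
    using integral_unique[OF HL2[OF i]] by simp
qed



lemma frac_swap:
  fixes a b \<rho> \<alpha> :: real and f d :: "real \<Rightarrow> real"
  assumes ab: "0 < a" "a < b" and p: "0 < \<rho>" "0 < \<alpha>" "\<alpha> < 1"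
    and cf: "continuous_on UNIV f" and cd: "continuous_on UNIV d"
  shows "integral {a..b} (\<lambda>t. f t * integral {a..t} (\<lambda>\<tau>. (t powr \<rho> - \<tau> powr \<rho>) powr (-\<alpha>) * d \<tau>))
       = integral {a..b} (\<lambda>\<tau>. d \<tau> * integral {\<tau>..b} (\<lambda>t. (t powr \<rho> - \<tau> powr \<rho>) powr (-\<alpha>) * f t))"
proof -
  have [measurable]: "f \<in> borel_measurable borel" "d \<in> borel_measurable borel"
    using cf cd by (auto intro: borel_measurable_continuous_onI)
  obtain Mf where Mf: "Mf \<ge> 0" "\<And>t. t \<in> {a..b} \<Longrightarrow> \<bar>f t\<bar> \<le> Mf"
    using cont_bound_compact[of a b f] cf continuous_on_subset by blast
  obtain Md where Md: "Md \<ge> 0" "\<And>t. t \<in> {a..b} \<Longrightarrow> \<bar>d t\<bar> \<le> Md"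
    using cont_bound_compact[of a b d] cd continuous_on_subset by blast
  define C0 where "C0 = kmin \<rho> a b powr (-\<alpha>) * ((b-a) powr (1-\<alpha>)/(1-\<alpha>))"
  define K where "K t \<tau> = (t powr \<rho> - \<tau> powr \<rho>) powr (-\<alpha>)" for t \<tau> :: real
  have [measurable]: "(\<lambda>(t,\<tau>). K t \<tau>) \<in> borel_measurable (lborel \<Otimes>\<^sub>M lborel)"
    unfolding K_def by measurable
  have Km1[measurable]: "K t \<in> borel_measurable borel" for t unfolding K_def by measurable
  have Km2[measurable]: "(\<lambda>t. K t \<tau>) \<in> borel_measurable borel" for \<tau> unfolding K_def by measurable
  define H where "H = (\<lambda>(t,\<tau>). if a \<le> \<tau> \<and> \<tau> \<le> t \<and> t \<le> b then K t \<tau> * d \<tau> * f t else 0)"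
  have Hm[measurable]: "H \<in> borel_measurable (lborel \<Otimes>\<^sub>M lborel)"
    unfolding H_def by measurable
  have ai1: "(\<lambda>\<tau>. K t \<tau> * d \<tau> * f t) absolutely_integrable_on {a..t}" if t: "t \<in> {a..b}" for t
  proof -
    have "continuous_on {a..t} (\<lambda>\<tau>. d \<tau> * f t)"
      using cd by (auto intro!: continuous_intros intro: continuous_on_subset)
    from kernel_prod_integrable[OF kernel1_integrable(1)[of a a t b \<rho> \<alpha>] this]
    show ?thesis using t ab p by (simp add: K_def mult.assoc)
  qed
  have in1: "(\<lambda>\<tau>. H (t,\<tau>)) = (\<lambda>\<tau>. indicator {a..t} \<tau> * (K t \<tau> * d \<tau> * f t))"
    if "t \<in> {a..b}" for t using that by (auto simp: H_def indicator_def fun_eq_iff)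
  have in0: "(\<lambda>\<tau>. H (t,\<tau>)) = (\<lambda>\<tau>. 0)" if "t \<notin> {a..b}" for t
    using that by (auto simp: H_def fun_eq_iff)
  have int1: "integrable lborel (\<lambda>\<tau>. H (t,\<tau>))" for t
  proof (cases "t \<in> {a..b}")
    case True
    show ?thesis unfolding in1[OF True] by (rule HL1(1)[OF ai1[OF True]]) measurable
  next
    case False then show ?thesis unfolding in0[OF False] by simp
  qed
  have lint1: "(LINT \<tau>|lborel. H (t,\<tau>)) = indicator {a..b} t * (f t * integral {a..t} (\<lambda>\<tau>. K t \<tau> * d \<tau>))" for t
  proof (cases "t \<in> {a..b}")
    case True
    have "(LINT \<tau>|lborel. H (t,\<tau>)) = integral {a..t} (\<lambda>\<tau>. K t \<tau> * d \<tau> * f t)"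
      unfolding in1[OF True] by (rule HL1(2)[OF ai1[OF True]]) measurable
    then show ?thesis using True by (simp add: mult.commute)
  next
    case False then show ?thesis unfolding in0[OF False] by simp
  qed
  have nbound: "(LINT \<tau>|lborel. norm (H (t,\<tau>))) \<le> indicator {a..b} t * (Md * Mf * C0)" for t
  proof (cases "t \<in> {a..b}")
    case True
    have ai: "(\<lambda>\<tau>. norm (K t \<tau> * d \<tau> * f t)) absolutely_integrable_on {a..t}"
      using absolutely_integrable_norm[OF ai1[OF True]] by (simp add: o_def)
    have eq: "(\<lambda>\<tau>. norm (H (t,\<tau>))) = (\<lambda>\<tau>. indicator {a..t} \<tau> * norm (K t \<tau> * d \<tau> * f t))"
      using True by (auto simp: H_def indicator_def fun_eq_iff)
    have "(LINT \<tau>|lborel. norm (H (t,\<tau>))) = integral {a..t} (\<lambda>\<tau>. norm (K t \<tau> * d \<tau> * f t))"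
      unfolding eq by (rule HL1(2)[OF ai]) measurable
    also have "\<dots> \<le> integral {a..t} (\<lambda>\<tau>. K t \<tau> * (Md * Mf))"
    proof (rule integral_le)
      show "(\<lambda>\<tau>. norm (K t \<tau> * d \<tau> * f t)) integrable_on {a..t}"
        using ai set_lebesgue_integral_eq_integral(1) by blast
      show "(\<lambda>\<tau>. K t \<tau> * (Md * Mf)) integrable_on {a..t}"
        using kernel1_integrable(1)[of a a t b \<rho> \<alpha>] True ab p
        by (auto simp: K_def intro!: integrable_on_mult_left dest: set_lebesgue_integral_eq_integral(1))
      fix \<tau> assume \<tau>: "\<tau> \<in> {a..t}"
      have "K t \<tau> \<ge> 0" by (simp add: K_def)
      moreover have "\<bar>d \<tau>\<bar> * \<bar>f t\<bar> \<le> Md * Mf"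
        using Md Mf \<tau> True by (intro mult_mono) auto
      ultimately show "norm (K t \<tau> * d \<tau> * f t) \<le> K t \<tau> * (Md * Mf)"
        by (simp add: abs_mult mult.assoc mult_left_mono)
    qed
    also have "\<dots> = integral {a..t} (K t) * (Md * Mf)" by simp
    also have "\<dots> \<le> C0 * (Md * Mf)"
    proof (rule mult_right_mono)
      have "integral {a..t} (K t) \<le> kmin \<rho> a b powr (-\<alpha>) * ((t-a) powr (1-\<alpha>)/(1-\<alpha>))"
        using kernel1_integrable(2)[of a a t b \<rho> \<alpha>] True ab p by (simp add: K_def[abs_def])
      also have "\<dots> \<le> C0" unfolding C0_def using True p
        by (intro mult_left_mono divide_right_mono powr_mono2) auto
      finally show "integral {a..t} (K t) \<le> C0" .
    qed (use Md Mf in auto)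
    finally show ?thesis using True by (simp add: algebra_simps)
  next
    case False
    then have "(\<lambda>\<tau>. norm (H (t,\<tau>))) = (\<lambda>\<tau>. 0)" by (auto simp: H_def fun_eq_iff)
    then show ?thesis using False by simp
  qed
  have integ1: "integrable lborel (\<lambda>t. LINT \<tau>|lborel. norm (H (t,\<tau>)))"
  proof (rule Bochner_Integration.integrable_bound)
    show "integrable lborel (\<lambda>t. indicator {a..b} t * (Md * Mf * C0))"
      using HL1(1)[where g="\<lambda>_. Md * Mf * C0" and S="{a..b}"]
      by (auto intro: absolutely_integrable_continuous_real continuous_intros)
    show "(\<lambda>t. LINT \<tau>|lborel. norm (H (t,\<tau>))) \<in> borel_measurable lborel"
      by measurable
    have "0 \<le> C0" unfolding C0_def using ab p by auto
    then show "AE t in lborel. norm (LINT \<tau>|lborel. norm (H (t,\<tau>))) \<le> norm (indicator {a..b} t * (Md * Mf * C0))"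
      using nbound Md Mf by (intro always_eventually allI) (auto simp: abs_mult)
  qed
  have Hint: "integrable (lborel \<Otimes>\<^sub>M lborel) H"
    by (rule lborel_pair.Fubini_integrable[OF Hm integ1]) (use int1 in auto)
  then have Hint': "integrable (lborel \<Otimes>\<^sub>M lborel) (case_prod (\<lambda>t \<tau>. H (t,\<tau>)))"
    by simp
  have ai2: "(\<lambda>t. K t \<tau> * d \<tau> * f t) absolutely_integrable_on {\<tau>..b}" if t: "\<tau> \<in> {a..b}" for \<tau>
  proof -
    have "continuous_on {\<tau>..b} (\<lambda>t. d \<tau> * f t)"
      using cf by (auto intro!: continuous_intros intro: continuous_on_subset)
    from kernel_prod_integrable[OF kernel2_integrable[of a \<tau> b b \<rho> \<alpha>] this]
    show ?thesis using t ab p by (simp add: K_def mult.assoc)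
  qed
  have lint2: "(LINT t|lborel. H (t,\<tau>)) = indicator {a..b} \<tau> * (d \<tau> * integral {\<tau>..b} (\<lambda>t. K t \<tau> * f t))" for \<tau>
  proof (cases "\<tau> \<in> {a..b}")
    case True
    have eq: "(\<lambda>t. H (t,\<tau>)) = (\<lambda>t. indicator {\<tau>..b} t * (K t \<tau> * d \<tau> * f t))"
      using True by (auto simp: H_def indicator_def fun_eq_iff)
    have "(LINT t|lborel. H (t,\<tau>)) = integral {\<tau>..b} (\<lambda>t. K t \<tau> * d \<tau> * f t)"
      unfolding eq by (rule HL1(2)[OF ai2[OF True]]) measurable
    also have "(\<lambda>t. K t \<tau> * d \<tau> * f t) = (\<lambda>t. d \<tau> * (K t \<tau> * f t))" by (auto simp: algebra_simps)
    finally show ?thesis using True by simp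
  next
    case False
    then have "(\<lambda>t. H (t,\<tau>)) = (\<lambda>t. 0)" by (auto simp: H_def fun_eq_iff)
    then show ?thesis using False by simp
  qed
  have FB: "(LINT \<tau>|lborel. LINT t|lborel. H (t,\<tau>)) = (LINT t|lborel. LINT \<tau>|lborel. H (t,\<tau>))"
    using lborel_pair.Fubini_integral[OF Hint'] by simp
  have isnd: "integrable lborel (\<lambda>\<tau>. LINT t|lborel. H (t,\<tau>))"
    using lborel_pair.integrable_snd[OF Hint'] by simp
  have ifst: "integrable lborel (\<lambda>t. LINT \<tau>|lborel. H (t,\<tau>))"
    using lborel_pair.integrable_fst[OF Hint'] by simp
  have R: "((\<lambda>\<tau>. d \<tau> * integral {\<tau>..b} (\<lambda>t. K t \<tau> * f t)) has_integral (LINT \<tau>|lborel. LINT t|lborel. H (t,\<tau>))) {a..b}"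
    using HL2[of "{a..b}" "\<lambda>\<tau>. d \<tau> * integral {\<tau>..b} (\<lambda>t. K t \<tau> * f t)"] isnd unfolding lint2 by simp
  have L: "((\<lambda>t. f t * integral {a..t} (\<lambda>\<tau>. K t \<tau> * d \<tau>)) has_integral (LINT t|lborel. LINT \<tau>|lborel. H (t,\<tau>))) {a..b}"
    using HL2[of "{a..b}" "\<lambda>t. f t * integral {a..t} (\<lambda>\<tau>. K t \<tau> * d \<tau>)"] ifst unfolding lint1 by simp
  show ?thesis using integral_unique[OF R] integral_unique[OF L] FB by (simp add: K_def)
qed



definition C1d :: "real \<Rightarrow> real \<Rightarrow> (real \<Rightarrow> real) \<Rightarrow> (real \<Rightarrow> real) \<Rightarrow> bool" where
  "C1d a b y y' \<longleftrightarrow> (\<forall>t\<in>{a..b}. (y has_vector_derivative y' t) (at t within {a..b})) \<and> continuous_on {a..b} y'"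

lemma C1_on_C1d: "C1_on a b y \<longleftrightarrow> (\<exists>y'. C1d a b y y')"
  unfolding C1_on_def C1d_def has_real_derivative_iff_has_vector_derivative ..

lemma C1d_vd: "a < b \<Longrightarrow> C1d a b y y' \<Longrightarrow> t \<in> {a..b} \<Longrightarrow> vector_derivative y (at t within {a..b}) = y' t"
  unfolding C1d_def using vector_derivative_within_closed_interval by blast

lemma C1d_cont: "C1d a b y y' \<Longrightarrow> continuous_on {a..b} y"
  unfolding C1d_def continuous_on_eq_continuous_within
  using has_vector_derivative_continuous by blast

lemma C1d_lin: "C1d a b y1 d1 \<Longrightarrow> C1d a b y2 d2 \<Longrightarrow> C1d a b (\<lambda>t. c1*y1 t + c2*y2 t) (\<lambda>t. c1*d1 t + c2*d2 t)"
  unfolding C1d_def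
  by (auto intro!: derivative_eq_intros continuous_intros simp: has_vector_derivative_def fun_eq_iff algebra_simps)

lemma capD_C1d:
  assumes "a < b" "C1d a b y y'" "t \<in> {a..b}"
  shows "capD \<alpha> \<rho> a b y t = \<rho> powr \<alpha> / Gamma (1 - \<alpha>) * integral {a..t} (\<lambda>\<tau>. (t powr \<rho> - \<tau> powr \<rho>) powr (-\<alpha>) * y' \<tau>)"
proof -
  have "integral {a..t} (\<lambda>\<tau>. (t powr \<rho> - \<tau> powr \<rho>) powr (-\<alpha>) * vector_derivative y (at \<tau> within {a..b}))
      = integral {a..t} (\<lambda>\<tau>. (t powr \<rho> - \<tau> powr \<rho>) powr (-\<alpha>) * y' \<tau>)"
    using assms C1d_vd by (intro integral_cong) auto
  then show ?thesis unfolding capD_def by simp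
qed

lemma capD_cont:
  assumes "0 < a" "a < b" "0 < \<rho>" "0 < \<alpha>" "\<alpha> < 1" "C1d a b y y'"
  shows "continuous_on {a..b} (capD \<alpha> \<rho> a b y)"
proof -
  have "continuous_on {a..b} (\<lambda>t. integral {a..t} (\<lambda>\<tau>. (t powr \<rho> - \<tau> powr \<rho>) powr (-\<alpha>) * y' \<tau>))"
    using frac_int_cont[of a b \<rho> \<alpha> y'] assms unfolding C1d_def by auto
  then have "continuous_on {a..b} (\<lambda>t. \<rho> powr \<alpha> / Gamma (1 - \<alpha>) * integral {a..t} (\<lambda>\<tau>. (t powr \<rho> - \<tau> powr \<rho>) powr (-\<alpha>) * y' \<tau>))"
    by (rule continuous_on_mult_left)
  then show ?thesis by (rule continuous_on_eq) (use capD_C1d[OF assms(2,6)] in auto)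
qed

lemma kd_integrable:
  fixes a b t \<rho> \<alpha> :: real and d :: "real \<Rightarrow> real"
  assumes "0 < a" "a < b" "0 < \<rho>" "0 < \<alpha>" "\<alpha> < 1" "continuous_on {a..b} d" "t \<in> {a..b}"
  shows "(\<lambda>\<tau>. (t powr \<rho> - \<tau> powr \<rho>) powr (-\<alpha>) * d \<tau>) integrable_on {a..t}"
proof -
  have sub: "{a..t} \<subseteq> {a..b}" using assms(7) by auto
  have "continuous_on {a..t} d" using assms(6) sub by (rule continuous_on_subset)
  from kernel_prod_integrable[OF kernel1_integrable(1)[of a a t b \<rho> \<alpha>] this]
  show ?thesis using assms set_lebesgue_integral_eq_integral(1) by auto
qed

lemma capD_lin:
  assumes "0 < a" "a < b" "0 < \<rho>" "0 < \<alpha>" "\<alpha> < 1" "C1d a b y1 d1" "C1d a b y2 d2" "t \<in> {a..b}"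
  shows "capD \<alpha> \<rho> a b (\<lambda>t. c1*y1 t + c2*y2 t) t = c1 * capD \<alpha> \<rho> a b y1 t + c2 * capD \<alpha> \<rho> a b y2 t"
proof -
  let ?K = "\<lambda>\<tau>. (t powr \<rho> - \<tau> powr \<rho>) powr (-\<alpha>)"
  have i1: "(\<lambda>\<tau>. ?K \<tau> * d1 \<tau>) integrable_on {a..t}"
    using kd_integrable[OF assms(1-5) _ assms(8)] assms(6) unfolding C1d_def by auto
  have i2: "(\<lambda>\<tau>. ?K \<tau> * d2 \<tau>) integrable_on {a..t}"
    using kd_integrable[OF assms(1-5) _ assms(8)] assms(7) unfolding C1d_def by auto
  have "integral {a..t} (\<lambda>\<tau>. ?K \<tau> * (c1 * d1 \<tau> + c2 * d2 \<tau>))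
     = integral {a..t} (\<lambda>\<tau>. c1 * (?K \<tau> * d1 \<tau>) + c2 * (?K \<tau> * d2 \<tau>))"
    by (simp add: algebra_simps)
  also have "\<dots> = c1 * integral {a..t} (\<lambda>\<tau>. ?K \<tau> * d1 \<tau>) + c2 * integral {a..t} (\<lambda>\<tau>. ?K \<tau> * d2 \<tau>)"
    using i1 i2 by (simp add: integral_add integrable_on_mult_right)
  finally show ?thesis
    using capD_C1d[OF assms(2) C1d_lin[OF assms(6,7)] assms(8)] capD_C1d[OF assms(2,6,8)] capD_C1d[OF assms(2,7,8)]
    by (simp add: add_divide_distrib algebra_simps)
qed

definition clamp :: "real \<Rightarrow> real \<Rightarrow> real \<Rightarrow> real" where "clamp a b t = max a (min b t)"

lemma clamp_ext:
  assumes "a \<le> b" "continuous_on {a..b} h"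
  shows "continuous_on UNIV (\<lambda>t. h (clamp a b t))" "\<And>t. t \<in> {a..b} \<Longrightarrow> h (clamp a b t) = h t"
proof -
  have "continuous_on UNIV (clamp a b)" unfolding clamp_def by (intro continuous_intros)
  moreover have "clamp a b ` UNIV \<subseteq> {a..b}" using assms by (auto simp: clamp_def)
  ultimately show "continuous_on UNIV (\<lambda>t. h (clamp a b t))"
    using continuous_on_compose2[OF assms(2)] by blast
  show "\<And>t. t \<in> {a..b} \<Longrightarrow> h (clamp a b t) = h t" by (auto simp: clamp_def)
qed



lemma cst_pos: "0 < (\<rho>::real) \<Longrightarrow> (\<alpha>::real) < 1 \<Longrightarrow> 0 < \<rho> powr \<alpha> / Gamma (1 - \<alpha>)"
  using Gamma_real_pos[of "1-\<alpha>"] by simp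

lemma frac_ibp:
  fixes a b \<rho> \<alpha> :: real and f \<eta> \<eta>' :: "real \<Rightarrow> real"
  assumes ab: "0 < a" "a < b" and p: "0 < \<rho>" "0 < \<alpha>" "\<alpha> < 1"
    and cf: "continuous_on {a..b} f" and C: "C1d a b \<eta> \<eta>'" and e0: "\<eta> a = 0" "\<eta> b = 0"
    and rd: "rightD_exists_cont \<alpha> \<rho> a b f"
  shows "integral {a..b} (\<lambda>t. f t * capD \<alpha> \<rho> a b \<eta> t) = - integral {a..b} (\<lambda>t. \<eta> t * rightD \<alpha> \<rho> a b f t)"
proof -
  define c where "c = \<rho> powr \<alpha> / Gamma (1 - \<alpha>)"
  have c: "c > 0" unfolding c_def using cst_pos p by auto
  have cd': "continuous_on {a..b} \<eta>'" using C unfolding C1d_def by auto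
  define F where "F t = f (clamp a b t)" for t
  define D where "D t = \<eta>' (clamp a b t)" for t
  have cF: "continuous_on UNIV F" and eF: "\<And>t. t \<in> {a..b} \<Longrightarrow> F t = f t"
    using clamp_ext[OF _ cf] ab unfolding F_def by auto
  have cD: "continuous_on UNIV D" and eD: "\<And>t. t \<in> {a..b} \<Longrightarrow> D t = \<eta>' t"
    using clamp_ext[OF _ cd'] ab unfolding D_def by auto
  define K where "K t \<tau> = (t powr \<rho> - \<tau> powr \<rho>) powr (-\<alpha>)" for t \<tau> :: real
  define \<Phi> where "\<Phi> t = integral {a..t} (\<lambda>\<tau>. K t \<tau> * \<eta>' \<tau>)" for t
  define G where "G s = integral {s..b} (\<lambda>\<tau>. (\<tau> powr \<rho> - s powr \<rho>) powr (-\<alpha>) * f \<tau>)" for s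
  have sw: "integral {a..b} (\<lambda>t. F t * integral {a..t} (\<lambda>\<tau>. K t \<tau> * D \<tau>))
       = integral {a..b} (\<lambda>\<tau>. D \<tau> * integral {\<tau>..b} (\<lambda>t. K t \<tau> * F t))"
    using frac_swap[OF ab p cF cD] unfolding K_def .
  have L: "integral {a..b} (\<lambda>t. F t * integral {a..t} (\<lambda>\<tau>. K t \<tau> * D \<tau>)) = integral {a..b} (\<lambda>t. f t * \<Phi> t)"
  proof (rule integral_cong)
    fix t assume t: "t \<in> {a..b}"
    have "integral {a..t} (\<lambda>\<tau>. K t \<tau> * D \<tau>) = \<Phi> t"
      unfolding \<Phi>_def using t eD by (intro integral_cong) auto
    then show "F t * integral {a..t} (\<lambda>\<tau>. K t \<tau> * D \<tau>) = f t * \<Phi> t" using eF t by simp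
  qed
  have R: "integral {a..b} (\<lambda>\<tau>. D \<tau> * integral {\<tau>..b} (\<lambda>t. K t \<tau> * F t)) = integral {a..b} (\<lambda>\<tau>. \<eta>' \<tau> * G \<tau>)"
  proof (rule integral_cong)
    fix \<tau> assume t: "\<tau> \<in> {a..b}"
    have "integral {\<tau>..b} (\<lambda>t. K t \<tau> * F t) = G \<tau>"
      unfolding G_def K_def using t eF by (intro integral_cong) auto
    then show "D \<tau> * integral {\<tau>..b} (\<lambda>t. K t \<tau> * F t) = \<eta>' \<tau> * G \<tau>" using eD t by simp
  qed
  have capeq: "capD \<alpha> \<rho> a b \<eta> t = c * \<Phi> t" if "t \<in> {a..b}" for t
    using capD_C1d[OF ab(2) C that] unfolding c_def \<Phi>_def K_def by simp
  have s1: "integral {a..b} (\<lambda>t. f t * capD \<alpha> \<rho> a b \<eta> t) = c * integral {a..b} (\<lambda>\<tau>. \<eta>' \<tau> * G \<tau>)"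
  proof -
    have "integral {a..b} (\<lambda>t. f t * capD \<alpha> \<rho> a b \<eta> t) = integral {a..b} (\<lambda>t. c * (f t * \<Phi> t))"
      using capeq by (intro integral_cong) auto
    also have "\<dots> = c * integral {a..b} (\<lambda>t. f t * \<Phi> t)" by simp
    finally show ?thesis using sw L R by simp
  qed
  define G' where "G' t = vector_derivative G (at t within {a..b})" for t
  have Gd: "(G has_vector_derivative G' t) (at t within {a..b})" if "t \<in> {a..b}" for t
    using rd that unfolding rightD_exists_cont_def G'_def G_def[abs_def]
    using vector_derivative_works by blast
  have rdeq: "rightD \<alpha> \<rho> a b f t = c * G' t" for t
    unfolding rightD_def G'_def G_def[abs_def] c_def by simp
  have cG: "continuous_on {a..b} G"
    unfolding continuous_on_eq_continuous_within using Gd has_vector_derivative_continuous by blast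
  have cG': "continuous_on {a..b} G'"
  proof -
    have "continuous_on {a..b} (rightD \<alpha> \<rho> a b f)" using rd unfolding rightD_exists_cont_def by auto
    then have "continuous_on {a..b} (\<lambda>t. (1/c) * rightD \<alpha> \<rho> a b f t)" by (rule continuous_on_mult_left)
    then show ?thesis using rdeq c by simp
  qed
  have ce: "continuous_on {a..b} \<eta>" using C1d_cont[OF C] .
  have ftc: "((\<lambda>t. \<eta> t * G' t + \<eta>' t * G t) has_integral (\<eta> b * G b - \<eta> a * G a)) {a..b}"
    apply (rule fundamental_theorem_of_calculus)
    using ab apply simp
    using C Gd unfolding C1d_def by (auto intro!: has_vector_derivative_mult)
  have i1: "(\<lambda>t. \<eta> t * G' t) integrable_on {a..b}"
    using ce cG' by (intro integrable_continuous_real continuous_intros)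
  have i2: "(\<lambda>t. \<eta>' t * G t) integrable_on {a..b}"
    using cd' cG by (intro integrable_continuous_real continuous_intros)
  have "integral {a..b} (\<lambda>t. \<eta> t * G' t) + integral {a..b} (\<lambda>t. \<eta>' t * G t) = 0"
    using integral_unique[OF ftc] e0 integral_add[OF i1 i2] by simp
  then have "integral {a..b} (\<lambda>t. \<eta>' t * G t) = - integral {a..b} (\<lambda>t. \<eta> t * G' t)" by simp
  then have "integral {a..b} (\<lambda>t. f t * capD \<alpha> \<rho> a b \<eta> t) = - (c * integral {a..b} (\<lambda>t. \<eta> t * G' t))"
    using s1 by simp
  also have "c * integral {a..b} (\<lambda>t. \<eta> t * G' t) = integral {a..b} (\<lambda>t. \<eta> t * rightD \<alpha> \<rho> a b f t)"
    unfolding rdeq by (simp add: algebra_simps)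
  finally show ?thesis .
qed



lemma sqmax_deriv: "((\<lambda>u::real. (max 0 u)^2) has_real_derivative 2 * max 0 u) (at u)"
proof (cases "u = 0")
  case True
  have "((\<lambda>y. ((max 0 y)^2 - (max 0 0)^2) / (y - 0)) \<longlongrightarrow> 0) (at (0::real))"
  proof (rule Lim_null_comparison)
    show "\<forall>\<^sub>F y in at 0. norm (((max 0 y)^2 - (max 0 0)^2) / (y - 0)) \<le> \<bar>y\<bar>"
    proof (intro always_eventually allI)
      fix y :: real
      show "norm (((max 0 y)^2 - (max 0 0)^2) / (y - 0)) \<le> \<bar>y\<bar>"
      proof (cases "y \<le> 0")
        case True then show ?thesis by simp
      next
        case False then show ?thesis by (simp add: power2_eq_square)
      qed
    qed
    show "((\<lambda>y::real. \<bar>y\<bar>) \<longlongrightarrow> 0) (at 0)"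
    proof -
      have "((\<lambda>y::real. \<bar>y\<bar>) \<longlongrightarrow> \<bar>0\<bar>) (at 0)" by (intro tendsto_rabs tendsto_ident_at)
      then show ?thesis by simp
    qed
  qed
  then show ?thesis using True by (simp add: has_field_derivative_iff)
next
  case False
  show ?thesis
  proof (cases "u > 0")
    case True
    have "((\<lambda>u::real. u^2) has_real_derivative 2 * max 0 u) (at u)" using True by (auto intro!: derivative_eq_intros)
    then show ?thesis
      by (rule has_field_derivative_transform_within_open[where S="{0<..}"]) (use True in auto)
  next
    case f2: False
    then have "u < 0" using False by auto
    have "((\<lambda>u::real. 0) has_real_derivative 2 * max 0 u) (at u)" using \<open>u < 0\<close> by simp
    then show ?thesis
      by (rule has_field_derivative_transform_within_open[where S="{..<0}"]) (use \<open>u < 0\<close> in auto)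
  qed
qed

lemma bump_exists:
  fixes a b :: real and E :: "real \<Rightarrow> real"
  assumes ab: "a < b" and cE: "continuous_on {a..b} E" and t0: "t0 \<in> {a..b}" and E0: "E t0 \<noteq> 0"
  shows "\<exists>\<eta> \<eta>'. C1d a b \<eta> \<eta>' \<and> \<eta> a = 0 \<and> \<eta> b = 0 \<and> integral {a..b} (\<lambda>t. \<eta> t * E t) \<noteq> 0"
proof -
  have "\<bar>E t0\<bar>/2 > 0" using E0 by simp
  moreover have "\<forall>\<epsilon>>0. \<exists>\<delta>>0. \<forall>x'\<in>{a..b}. dist x' t0 < \<delta> \<longrightarrow> dist (E x') (E t0) < \<epsilon>"
    using cE t0 unfolding continuous_on_iff by blast
  ultimately obtain \<delta> where \<delta>: "\<delta> > 0" "\<And>t. t \<in> {a..b} \<Longrightarrow> dist t t0 < \<delta> \<Longrightarrow> dist (E t) (E t0) < \<bar>E t0\<bar>/2"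
    by blast
  define c where "c = max a (t0 - \<delta>/2)"
  define d where "d = min b (t0 + \<delta>/2)"
  have cd: "a \<le> c" "c < d" "d \<le> b" using t0 ab \<delta> by (auto simp: c_def d_def)
  have sgn: "E t * E t0 > 0" if "t \<in> {c..d}" for t
  proof -
    have "t \<in> {a..b}" "dist t t0 < \<delta>" using that cd t0 \<delta> by (auto simp: c_def d_def dist_real_def)
    then have r: "\<bar>E t - E t0\<bar> < \<bar>E t0\<bar>/2" using \<delta> by (auto simp: dist_real_def)
    have "\<bar>(E t - E t0) * E t0\<bar> \<le> \<bar>E t0\<bar>/2 * \<bar>E t0\<bar>"
    proof -
      have "\<bar>E t - E t0\<bar> * \<bar>E t0\<bar> \<le> \<bar>E t0\<bar>/2 * \<bar>E t0\<bar>" using r by (intro mult_right_mono) auto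
      then show ?thesis by (simp add: abs_mult)
    qed
    moreover have "E t * E t0 = E t0 * E t0 + (E t - E t0) * E t0" by (simp add: algebra_simps)
    moreover have "E t0 * E t0 = \<bar>E t0\<bar> * \<bar>E t0\<bar>" by (simp add: abs_mult[symmetric])
    moreover have "\<bar>E t0\<bar> * \<bar>E t0\<bar> > 0"
    proof -
      have "0 < \<bar>E t0\<bar>" using E0 by simp
      from mult_pos_pos[OF this this] show ?thesis .
    qed
    moreover have "- \<bar>(E t - E t0) * E t0\<bar> \<le> (E t - E t0) * E t0" by linarith
    ultimately show ?thesis by linarith
  qed
  define w where "w t = (t - c) * (d - t)" for t
  define \<eta> where "\<eta> t = (max 0 (w t))^2" for t
  define \<eta>' where "\<eta>' t = 2 * max 0 (w t) * ((d - t) - (t - c))" for t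
  have der: "(\<eta> has_real_derivative \<eta>' t) (at t)" for t
  proof -
    have "(w has_real_derivative ((d - t) - (t - c))) (at t)"
      unfolding w_def by (auto intro!: derivative_eq_intros)
    from DERIV_chain2[OF sqmax_deriv this] show ?thesis
      unfolding \<eta>_def[abs_def] \<eta>'_def by (simp add: mult.assoc)
  qed
  have C: "C1d a b \<eta> \<eta>'"
    unfolding C1d_def
  proof
    show "\<forall>t\<in>{a..b}. (\<eta> has_vector_derivative \<eta>' t) (at t within {a..b})"
      using der by (auto simp: has_real_derivative_iff_has_vector_derivative[symmetric] intro: has_field_derivative_at_within)
    show "continuous_on {a..b} \<eta>'" unfolding \<eta>'_def w_def by (intro continuous_intros)
  qed
  have wout: "w t \<le> 0" if "t \<notin> {c<..<d}" for t
  proof (cases "t \<le> c")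
    case True
    then have "(t - c) \<le> 0" "d - t \<ge> 0" using cd by auto
    then show ?thesis unfolding w_def by (simp add: mult_nonpos_nonneg)
  next
    case False
    then have "t \<ge> d" using that by auto
    then have "(t - c) \<ge> 0" "d - t \<le> 0" using cd by auto
    then show ?thesis unfolding w_def by (simp add: mult_nonneg_nonpos)
  qed
  have e0: "\<eta> t = 0" if "t \<notin> {c<..<d}" for t using wout[OF that] by (simp add: \<eta>_def)
  have ea: "\<eta> a = 0" and eb: "\<eta> b = 0" using cd by (auto intro!: e0)
  let ?g = "\<lambda>t. E t0 * (\<eta> t * E t)"
  have cg: "continuous_on {a..b} ?g"
    unfolding \<eta>_def w_def using cE by (intro continuous_intros)
  have gnn: "0 \<le> ?g t" if "t \<in> {a..b}" for t
  proof (cases "t \<in> {c<..<d}")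
    case True
    then have "E t * E t0 > 0" using sgn by auto
    moreover have "\<eta> t \<ge> 0" by (simp add: \<eta>_def)
    ultimately have "0 \<le> (E t * E t0) * \<eta> t" by simp
    then show ?thesis by (simp add: algebra_simps)
  next
    case False then show ?thesis using e0 by simp
  qed
  define m where "m = (c + d) / 2"
  have m: "m \<in> {c<..<d}" "m \<in> {a..b}" using cd by (auto simp: m_def)
  have "w m > 0" using m unfolding w_def by (auto intro: mult_pos_pos)
  then have "\<eta> m > 0" by (simp add: \<eta>_def)
  then have gm: "?g m \<noteq> 0" using sgn[of m] m by auto
  have "integral {a..b} ?g \<noteq> 0"
  proof
    assume z: "integral {a..b} ?g = 0"
    have "(?g has_integral 0) (cbox a b)"
      using integrable_continuous_real[OF cg] z by (metis box_real(2) integrable_integral)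
    from has_integral_0_cbox_imp_0[OF _ _ this, of m] cg gnn m gm ab
    show False by (auto simp: box_real)
  qed
  then have "integral {a..b} (\<lambda>t. \<eta> t * E t) \<noteq> 0" by simp
  then show ?thesis using C ea eb by blast
qed



lemma F_partials_deriv:
  fixes F :: "real \<Rightarrow> real \<Rightarrow> real \<Rightarrow> real"
  assumes t: "t \<in> {a..b}"
    and dif: "\<forall>t\<in>{a..b}. \<forall>u v. (\<lambda>w. F t w v) differentiable (at u) \<and> (\<lambda>w. F t u w) differentiable (at v)"
    and c3: "continuous_on ({a..b} \<times> UNIV \<times> UNIV) (\<lambda>(t,u,v). partial3 F t u v)"
  shows "((\<lambda>(u,v). F t u v) has_derivative (\<lambda>(hu,hv). partial2 F t u v * hu + partial3 F t u v * hv)) (at (u,v))"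
proof -
  have d2: "((\<lambda>w. F t w v) has_derivative (\<lambda>h. partial2 F t u v * h)) (at u within UNIV)"
    using dif t DERIV_deriv_iff_real_differentiable[of "\<lambda>w. F t w v" u]
    unfolding partial2_def has_field_derivative_def by auto
  have d3: "((\<lambda>w. F t x w) has_derivative blinfun_apply (partial3 F t x y *\<^sub>R id_blinfun)) (at y within UNIV)"
    if "x \<in> UNIV" "y \<in> UNIV" for x y
  proof -
    have "((\<lambda>w. F t x w) has_derivative (\<lambda>h. partial3 F t x y * h)) (at y)"
      using dif t DERIV_deriv_iff_real_differentiable[of "\<lambda>w. F t x w" y]
      unfolding partial3_def has_field_derivative_def by auto
    moreover have "blinfun_apply (partial3 F t x y *\<^sub>R id_blinfun) = (\<lambda>h. partial3 F t x y * h)"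
      by (auto simp: fun_eq_iff scaleR_blinfun.rep_eq)
    ultimately show ?thesis by simp
  qed
  have cc: "continuous (at (u, v) within UNIV \<times> UNIV) (\<lambda>(x, y). partial3 F t x y *\<^sub>R (id_blinfun::real \<Rightarrow>\<^sub>L real))"
  proof -
    have "continuous_on (UNIV \<times> UNIV) (\<lambda>(x,y). partial3 F t x y)"
    proof -
      have "continuous_on (UNIV \<times> UNIV) ((\<lambda>(t,u,v). partial3 F t u v) \<circ> (\<lambda>(x,y). (t,x,y)))"
        apply (rule continuous_on_compose)
         apply (auto intro!: continuous_intros simp: split_beta)[1]
        apply (rule continuous_on_subset[OF c3])
        using t by auto
      then show ?thesis by (simp add: o_def split_beta)
    qed
    then have "continuous_on (UNIV \<times> UNIV) (\<lambda>(x,y). partial3 F t x y *\<^sub>R (id_blinfun::real \<Rightarrow>\<^sub>L real))"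
      by (auto simp: split_beta intro!: continuous_intros)
    then show ?thesis unfolding continuous_on_eq_continuous_within by blast
  qed
  from has_derivative_partialsI[OF d2 d3 cc] show ?thesis
    by (simp add: split_beta' scaleR_blinfun.rep_eq)
qed



lemma cont_snd_comp: "continuous_on {a..b} h \<Longrightarrow> continuous_on (S \<times> {a..b}) (\<lambda>z. h (snd z))"
  by (rule continuous_on_compose2[of "{a..b}" h]) (auto intro: continuous_intros)

lemma cont_comp3:
  assumes "continuous_on ({a..b}\<times>UNIV\<times>UNIV) (\<lambda>(t,u,v). G t u v)"
    "continuous_on T \<phi>" "continuous_on T \<psi>" "continuous_on T \<tau>" "\<tau> ` T \<subseteq> {a..b}"
  shows "continuous_on T (\<lambda>z. G (\<tau> z) (\<phi> z) (\<psi> z))"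
proof -
  have "continuous_on T (\<lambda>z. (\<lambda>(t,u,v). G t u v) (\<tau> z, \<phi> z, \<psi> z))"
    apply (rule continuous_on_compose2[OF assms(1)])
    using assms by (auto intro!: continuous_intros)
  then show ?thesis by simp
qed

lemma psi_deriv:
  fixes F :: "real \<Rightarrow> real \<Rightarrow> real \<Rightarrow> real" and u0 v0 p1 p2 q1 q2 :: "real \<Rightarrow> real"
  defines "U \<equiv> \<lambda>e t. u0 t + fst e * p1 t + snd e * p2 t"
    and "V \<equiv> \<lambda>e t. v0 t + fst e * q1 t + snd e * q2 t"
  assumes ab: "a \<le> b"
    and cF: "continuous_on ({a..b}\<times>UNIV\<times>UNIV) (\<lambda>(t,u,v). F t u v)"
    and dif: "\<forall>t\<in>{a..b}. \<forall>u v. (\<lambda>w. F t w v) differentiable (at u) \<and> (\<lambda>w. F t u w) differentiable (at v)"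
    and c2: "continuous_on ({a..b} \<times> UNIV \<times> UNIV) (\<lambda>(t,u,v). partial2 F t u v)"
    and c3: "continuous_on ({a..b} \<times> UNIV \<times> UNIV) (\<lambda>(t,u,v). partial3 F t u v)"
    and cu: "continuous_on {a..b} u0" "continuous_on {a..b} v0" "continuous_on {a..b} p1"
      "continuous_on {a..b} p2" "continuous_on {a..b} q1" "continuous_on {a..b} q2"
  shows "((\<lambda>e. integral {a..b} (\<lambda>t. F t (U e t) (V e t))) has_derivative
     (\<lambda>h. fst h * integral {a..b} (\<lambda>t. partial2 F t (U e t) (V e t) * p1 t + partial3 F t (U e t) (V e t) * q1 t)
        + snd h * integral {a..b} (\<lambda>t. partial2 F t (U e t) (V e t) * p2 t + partial3 F t (U e t) (V e t) * q2 t))) (at e)"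
proof -
  define c1 where "c1 e t = partial2 F t (U e t) (V e t) * p1 t + partial3 F t (U e t) (V e t) * q1 t" for e t
  define c2' where "c2' e t = partial2 F t (U e t) (V e t) * p2 t + partial3 F t (U e t) (V e t) * q2 t" for e t
  define fx where "fx e t = c1 e t *\<^sub>R (fst_blinfun::(real\<times>real) \<Rightarrow>\<^sub>L real) + c2' e t *\<^sub>R snd_blinfun" for e t
  have fxa: "blinfun_apply (fx e t) = (\<lambda>h. c1 e t * fst h + c2' e t * snd h)" for e t
    by (auto simp: fx_def fun_eq_iff blinfun.add_left scaleR_blinfun.rep_eq)
  have cUV: "continuous_on (UNIV \<times> {a..b}) (\<lambda>z. U (fst z) (snd z))" "continuous_on (UNIV \<times> {a..b}) (\<lambda>z. V (fst z) (snd z))"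
    unfolding U_def V_def using cu by (auto intro!: continuous_intros cont_snd_comp)
  have img: "snd ` (UNIV \<times> {a..b}) \<subseteq> {a..b}" by auto
  have cP: "continuous_on (UNIV \<times> {a..b}) (\<lambda>z. partial2 F (snd z) (U (fst z) (snd z)) (V (fst z) (snd z)))"
           "continuous_on (UNIV \<times> {a..b}) (\<lambda>z. partial3 F (snd z) (U (fst z) (snd z)) (V (fst z) (snd z)))"
    using cont_comp3[OF c2 cUV continuous_on_snd img] cont_comp3[OF c3 cUV continuous_on_snd img] by auto
  have cc: "continuous_on (UNIV \<times> {a..b}) (\<lambda>z. c1 (fst z) (snd z))" "continuous_on (UNIV \<times> {a..b}) (\<lambda>z. c2' (fst z) (snd z))"
    unfolding c1_def c2'_def using cP cu by (auto intro!: continuous_intros cont_snd_comp)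
  have cfx: "continuous_on (UNIV \<times> cbox a b) (\<lambda>(e, t). fx e t)"
    unfolding fx_def split_beta using cc by (auto intro!: continuous_intros)
  have cUVt: "continuous_on {a..b} (U e)" "continuous_on {a..b} (V e)" for e
    unfolding U_def V_def using cu by (auto intro!: continuous_intros)
  have cid: "continuous_on {a..b} (\<lambda>t::real. t)" by (rule continuous_on_id)
  have cFt: "continuous_on {a..b} (\<lambda>t. F t (U e t) (V e t))" for e
    by (rule cont_comp3[OF cF cUVt cid]) auto
  have cct: "continuous_on {a..b} (c1 e)" "continuous_on {a..b} (c2' e)" for e
  proof -
    have "continuous_on {a..b} (\<lambda>t. partial2 F t (U e t) (V e t))" "continuous_on {a..b} (\<lambda>t. partial3 F t (U e t) (V e t))"
      by (rule cont_comp3[OF c2 cUVt cid], simp, rule cont_comp3[OF c3 cUVt cid], simp)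
    then show "continuous_on {a..b} (c1 e)" "continuous_on {a..b} (c2' e)"
      unfolding c1_def[abs_def] c2'_def[abs_def] using cu by (auto intro!: continuous_intros)
  qed
  have pd: "((\<lambda>e. F t (U e t) (V e t)) has_derivative blinfun_apply (fx e t)) (at e within UNIV)"
    if t: "t \<in> cbox a b" for e t
  proof -
    have t': "t \<in> {a..b}" using t by simp
    have inner: "((\<lambda>e. (U e t, V e t)) has_derivative (\<lambda>h. (fst h * p1 t + snd h * p2 t, fst h * q1 t + snd h * q2 t))) (at e)"
      unfolding U_def V_def by (auto intro!: derivative_eq_intros)
    have outer: "((\<lambda>(u,v). F t u v) has_derivative (\<lambda>(hu,hv). partial2 F t (U e t) (V e t) * hu + partial3 F t (U e t) (V e t) * hv)) (at (U e t, V e t))"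
      by (rule F_partials_deriv[OF t' dif c3])
    from has_derivative_compose[OF inner outer]
    have "((\<lambda>e. F t (U e t) (V e t)) has_derivative (\<lambda>h. partial2 F t (U e t) (V e t) * (fst h * p1 t + snd h * p2 t)
        + partial3 F t (U e t) (V e t) * (fst h * q1 t + snd h * q2 t))) (at e)" by simp
    moreover have "(\<lambda>h. partial2 F t (U e t) (V e t) * (fst h * p1 t + snd h * p2 t)
        + partial3 F t (U e t) (V e t) * (fst h * q1 t + snd h * q2 t)) = blinfun_apply (fx e t)"
      unfolding fxa c1_def c2'_def by (auto simp: fun_eq_iff algebra_simps)
    ultimately show ?thesis by simp
  qed
  have integ: "(\<lambda>t. F t (U e t) (V e t)) integrable_on cbox a b" for e
    using integrable_continuous_real[OF cFt] by simp
  from leibniz_rule[where f="\<lambda>e t. F t (U e t) (V e t)" and U=UNIV and fx=fx, OF pd integ cfx]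
  have L: "((\<lambda>e. integral (cbox a b) (\<lambda>t. F t (U e t) (V e t))) has_derivative blinfun_apply (integral (cbox a b) (fx e))) (at e)"
    by simp
  have i1: "(c1 e has_integral integral {a..b} (c1 e)) {a..b}" and i2: "(c2' e has_integral integral {a..b} (c2' e)) {a..b}"
    using integrable_continuous_real[OF cct(1)[of e]] integrable_continuous_real[OF cct(2)[of e]]
    by (blast intro: integrable_integral)+
  have "(fx e has_integral (integral {a..b} (c1 e) *\<^sub>R fst_blinfun + integral {a..b} (c2' e) *\<^sub>R snd_blinfun)) {a..b}"
    unfolding fx_def by (intro has_integral_add has_integral_scaleR_left i1 i2)
  then have "integral (cbox a b) (fx e) = integral {a..b} (c1 e) *\<^sub>R fst_blinfun + integral {a..b} (c2' e) *\<^sub>R snd_blinfun"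
    by (simp add: integral_unique)
  then have "blinfun_apply (integral (cbox a b) (fx e)) = (\<lambda>h. fst h * integral {a..b} (c1 e) + snd h * integral {a..b} (c2' e))"
    by (auto simp: fun_eq_iff blinfun.add_left scaleR_blinfun.rep_eq)
  then show ?thesis using L unfolding c1_def c2'_def by (simp add: mult.commute)
qed



lemma rightD_lin:
  fixes a b \<rho> \<alpha> lam :: real and f1 f2 :: "real \<Rightarrow> real"
  assumes ab: "0 < a" "a < b" and p: "0 < \<rho>" "0 < \<alpha>" "\<alpha> < 1"
    and c1: "continuous_on {a..b} f1" and c2: "continuous_on {a..b} f2"
    and r1: "rightD_exists_cont \<alpha> \<rho> a b f1" and r2: "rightD_exists_cont \<alpha> \<rho> a b f2"
    and t: "t \<in> {a..b}" and fe: "\<And>s. s \<in> {a..b} \<Longrightarrow> f s = f1 s + lam * f2 s"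
  shows "rightD \<alpha> \<rho> a b f t = rightD \<alpha> \<rho> a b f1 t + lam * rightD \<alpha> \<rho> a b f2 t"
proof -
  define G where "G f s = integral {s..b} (\<lambda>\<tau>. (\<tau> powr \<rho> - s powr \<rho>) powr (-\<alpha>) * f \<tau>)" for f :: "real \<Rightarrow> real" and s
  have ii: "(\<lambda>\<tau>. (\<tau> powr \<rho> - s powr \<rho>) powr (-\<alpha>) * f \<tau>) integrable_on {s..b}"
    if "s \<in> {a..b}" "continuous_on {a..b} f" for f s
  proof -
    have "continuous_on {s..b} f" using that by (auto intro: continuous_on_subset)
    from kernel_prod_integrable[OF kernel2_integrable[of a s b b \<rho> \<alpha>] this]
    show ?thesis using that ab p set_lebesgue_integral_eq_integral(1) by auto
  qed
  have Geq: "G f s = G f1 s + lam * G f2 s" if "s \<in> {a..b}" for s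
  proof -
    have "G f s = integral {s..b} (\<lambda>\<tau>. (\<tau> powr \<rho> - s powr \<rho>) powr (-\<alpha>) * f1 \<tau>
           + lam * ((\<tau> powr \<rho> - s powr \<rho>) powr (-\<alpha>) * f2 \<tau>))"
      unfolding G_def using that by (intro integral_cong) (auto simp: fe algebra_simps)
    also have "\<dots> = G f1 s + lam * G f2 s"
      unfolding G_def using ii[OF that c1] ii[OF that c2]
      by (simp add: integral_add integrable_on_mult_right)
    finally show ?thesis .
  qed
  have d1: "(G f1 has_vector_derivative vector_derivative (G f1) (at t within {a..b})) (at t within {a..b})"
    using r1 t unfolding rightD_exists_cont_def G_def[abs_def] using vector_derivative_works by blast
  have d2: "(G f2 has_vector_derivative vector_derivative (G f2) (at t within {a..b})) (at t within {a..b})"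
    using r2 t unfolding rightD_exists_cont_def G_def[abs_def] using vector_derivative_works by blast
  have "((\<lambda>s. G f1 s + lam * G f2 s) has_vector_derivative
      (vector_derivative (G f1) (at t within {a..b}) + lam * vector_derivative (G f2) (at t within {a..b}))) (at t within {a..b})"
    by (intro has_vector_derivative_add has_vector_derivative_mult_right d1 d2)
  note D = this
  have "(G f has_vector_derivative
      (vector_derivative (G f1) (at t within {a..b}) + lam * vector_derivative (G f2) (at t within {a..b}))) (at t within {a..b})"
    by (rule has_vector_derivative_transform[OF t Geq D])
  then have "vector_derivative (G f) (at t within {a..b})
      = vector_derivative (G f1) (at t within {a..b}) + lam * vector_derivative (G f2) (at t within {a..b})"
    using vector_derivative_within_closed_interval[OF ab(2) t] by blast
  then show ?thesis unfolding rightD_def G_def[abs_def] by (simp add: algebra_simps)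
qed

lemma partial_comb:
  fixes L g :: "real \<Rightarrow> real \<Rightarrow> real \<Rightarrow> real"
  assumes "(\<lambda>w. L t w v) differentiable (at u)" "(\<lambda>w. g t w v) differentiable (at u)"
    "(\<lambda>w. L t u w) differentiable (at v)" "(\<lambda>w. g t u w) differentiable (at v)"
  shows "partial2 (\<lambda>t u v. L t u v + lam * g t u v) t u v = partial2 L t u v + lam * partial2 g t u v"
    and "partial3 (\<lambda>t u v. L t u v + lam * g t u v) t u v = partial3 L t u v + lam * partial3 g t u v"
proof -
  have a1: "((\<lambda>w. L t w v) has_real_derivative partial2 L t u v) (at u)"
    using assms(1) DERIV_deriv_iff_real_differentiable unfolding partial2_def by blast
  have a2: "((\<lambda>w. g t w v) has_real_derivative partial2 g t u v) (at u)"
    using assms(2) DERIV_deriv_iff_real_differentiable unfolding partial2_def by blast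
  have "((\<lambda>w. L t w v + lam * g t w v) has_real_derivative partial2 L t u v + lam * partial2 g t u v) (at u)"
    using DERIV_add[OF a1 DERIV_cmult[OF a2]] .
  then show "partial2 (\<lambda>t u v. L t u v + lam * g t u v) t u v = partial2 L t u v + lam * partial2 g t u v"
    unfolding partial2_def by (rule DERIV_imp_deriv)
  have b1: "((\<lambda>w. L t u w) has_real_derivative partial3 L t u v) (at v)"
    using assms(3) DERIV_deriv_iff_real_differentiable unfolding partial3_def by blast
  have b2: "((\<lambda>w. g t u w) has_real_derivative partial3 g t u v) (at v)"
    using assms(4) DERIV_deriv_iff_real_differentiable unfolding partial3_def by blast
  have "((\<lambda>w. L t u w + lam * g t u w) has_real_derivative partial3 L t u v + lam * partial3 g t u v) (at v)"
    using DERIV_add[OF b1 DERIV_cmult[OF b2]] .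
  then show "partial3 (\<lambda>t u v. L t u v + lam * g t u v) t u v = partial3 L t u v + lam * partial3 g t u v"
    unfolding partial3_def by (rule DERIV_imp_deriv)
qed



lemma lagr_unpack:
  assumes "lagrangian_ok \<alpha> \<rho> a b F"
  shows "continuous_on ({a..b}\<times>UNIV\<times>UNIV) (\<lambda>(t,u,v). F t u v)"
    "\<forall>t\<in>{a..b}. \<forall>u v. (\<lambda>w. F t w v) differentiable (at u) \<and> (\<lambda>w. F t u w) differentiable (at v)"
    "continuous_on ({a..b} \<times> UNIV \<times> UNIV) (\<lambda>(t,u,v). partial2 F t u v)"
    "continuous_on ({a..b} \<times> UNIV \<times> UNIV) (\<lambda>(t,u,v). partial3 F t u v)"
    "\<And>y. C1_on a b y \<Longrightarrow> rightD_exists_cont \<alpha> \<rho> a b (\<lambda>t. partial3 F t (y t) (capD \<alpha> \<rho> a b y t))"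
  using assms unfolding lagrangian_ok_def by auto

lemma comp_cont_t:
  assumes "continuous_on ({a..b}\<times>UNIV\<times>UNIV) (\<lambda>(t,u,v). G t u v)" "continuous_on {a..b} \<phi>" "continuous_on {a..b} \<psi>"
  shows "continuous_on {a..b} (\<lambda>t. G t (\<phi> t) (\<psi> t))"
  using cont_comp3[OF assms(1) assms(2) assms(3) continuous_on_id] by auto

lemma first_var:
  fixes a b \<rho> \<alpha> :: real and F :: "real \<Rightarrow> real \<Rightarrow> real \<Rightarrow> real" and x x' \<eta> \<eta>' :: "real \<Rightarrow> real"
  assumes ab: "0 < a" "a < b" and p: "0 < \<rho>" "0 < \<alpha>" "\<alpha> < 1"
    and LOK: "lagrangian_ok \<alpha> \<rho> a b F" and Cx: "C1d a b x x'" and Ce: "C1d a b \<eta> \<eta>'"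
    and e0: "\<eta> a = 0" "\<eta> b = 0"
  shows "integral {a..b} (\<lambda>t. partial2 F t (x t) (capD \<alpha> \<rho> a b x t) * \<eta> t + partial3 F t (x t) (capD \<alpha> \<rho> a b x t) * capD \<alpha> \<rho> a b \<eta> t)
       = integral {a..b} (\<lambda>t. \<eta> t * (partial2 F t (x t) (capD \<alpha> \<rho> a b x t) - rightD \<alpha> \<rho> a b (\<lambda>s. partial3 F s (x s) (capD \<alpha> \<rho> a b x s)) t))"
proof -
  note U = lagr_unpack[OF LOK]
  let ?D = "capD \<alpha> \<rho> a b x"
  let ?P2 = "\<lambda>t. partial2 F t (x t) (?D t)"
  let ?f3 = "\<lambda>t. partial3 F t (x t) (?D t)"
  have cx: "continuous_on {a..b} x" using C1d_cont[OF Cx] .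
  have ce: "continuous_on {a..b} \<eta>" using C1d_cont[OF Ce] .
  have cD: "continuous_on {a..b} ?D" using capD_cont[OF ab p Cx] .
  have cDe: "continuous_on {a..b} (capD \<alpha> \<rho> a b \<eta>)" using capD_cont[OF ab p Ce] .
  have cP2: "continuous_on {a..b} ?P2" using comp_cont_t[OF U(3) cx cD] .
  have cf3: "continuous_on {a..b} ?f3" using comp_cont_t[OF U(4) cx cD] .
  have rd: "rightD_exists_cont \<alpha> \<rho> a b ?f3" using U(5)[of x] Cx C1_on_C1d by blast
  have crd: "continuous_on {a..b} (rightD \<alpha> \<rho> a b ?f3)" using rd unfolding rightD_exists_cont_def by auto
  have ibp: "integral {a..b} (\<lambda>t. ?f3 t * capD \<alpha> \<rho> a b \<eta> t) = - integral {a..b} (\<lambda>t. \<eta> t * rightD \<alpha> \<rho> a b ?f3 t)"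
    by (rule frac_ibp[OF ab p cf3 Ce e0 rd])
  have i1: "(\<lambda>t. ?P2 t * \<eta> t) integrable_on {a..b}" using cP2 ce by (intro integrable_continuous_real continuous_intros)
  have i2: "(\<lambda>t. ?f3 t * capD \<alpha> \<rho> a b \<eta> t) integrable_on {a..b}" using cf3 cDe by (intro integrable_continuous_real continuous_intros)
  have i3: "(\<lambda>t. \<eta> t * rightD \<alpha> \<rho> a b ?f3 t) integrable_on {a..b}" using ce crd by (intro integrable_continuous_real continuous_intros)
  have "integral {a..b} (\<lambda>t. ?P2 t * \<eta> t + ?f3 t * capD \<alpha> \<rho> a b \<eta> t)
      = integral {a..b} (\<lambda>t. ?P2 t * \<eta> t) + integral {a..b} (\<lambda>t. ?f3 t * capD \<alpha> \<rho> a b \<eta> t)"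
    by (rule integral_add[OF i1 i2])
  also have "\<dots> = integral {a..b} (\<lambda>t. ?P2 t * \<eta> t) - integral {a..b} (\<lambda>t. \<eta> t * rightD \<alpha> \<rho> a b ?f3 t)"
    using ibp by simp
  also have "\<dots> = integral {a..b} (\<lambda>t. ?P2 t * \<eta> t - \<eta> t * rightD \<alpha> \<rho> a b ?f3 t)"
    by (rule integral_diff[OF i1 i3, symmetric])
  also have "\<dots> = integral {a..b} (\<lambda>t. \<eta> t * (?P2 t - rightD \<alpha> \<rho> a b ?f3 t))"
    by (simp add: algebra_simps)
  finally show ?thesis .
qed



definition ELx :: "real \<Rightarrow> real \<Rightarrow> real \<Rightarrow> real \<Rightarrow> (real \<Rightarrow> real \<Rightarrow> real \<Rightarrow> real) \<Rightarrow> (real \<Rightarrow> real) \<Rightarrow> real \<Rightarrow> real" where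
  "ELx \<alpha> \<rho> a b F x t = partial2 F t (x t) (capD \<alpha> \<rho> a b x t)
     - rightD \<alpha> \<rho> a b (\<lambda>s. partial3 F s (x s) (capD \<alpha> \<rho> a b x s)) t"

lemma norm_fst_le': "norm (fst e) \<le> norm (e::real\<times>real)"
proof (cases e)
  case (Pair u v) then show ?thesis using norm_fst_le[of u v] by simp
qed
lemma norm_snd_le': "norm (snd e) \<le> norm (e::real\<times>real)"
proof (cases e)
  case (Pair u v) then show ?thesis using norm_snd_le[of v u] by simp
qed

lemma bl_aux: "bounded_linear (\<lambda>x::real\<times>real. (p * fst x - q * snd x) / d)"
  "bounded_linear (\<lambda>x::real\<times>real. (p * snd x - q * fst x) / d)"
proof -
  have f: "bounded_linear (\<lambda>x::real\<times>real. c * fst x)" for c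
    using bounded_linear_compose[OF bounded_linear_mult_right bounded_linear_fst] .
  have s: "bounded_linear (\<lambda>x::real\<times>real. c * snd x)" for c
    using bounded_linear_compose[OF bounded_linear_mult_right bounded_linear_snd] .
  show "bounded_linear (\<lambda>x::real\<times>real. (p * fst x - q * snd x) / d)"
    using bounded_linear_compose[OF bounded_linear_divide bounded_linear_sub[OF f s]] .
  show "bounded_linear (\<lambda>x::real\<times>real. (p * snd x - q * fst x) / d)"
    using bounded_linear_compose[OF bounded_linear_divide bounded_linear_sub[OF s f]] .
qed

lemma det_zero:
  fixes a b \<rho> \<alpha> xa xb l :: real and L g :: "real \<Rightarrow> real \<Rightarrow> real \<Rightarrow> real"
    and x x' \<eta>1 \<eta>1' \<eta>2 \<eta>2' :: "real \<Rightarrow> real"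
  assumes ab: "0 < a" "a < b" and p: "0 < \<rho>" "0 < \<alpha>" "\<alpha> < 1"
    and LL: "lagrangian_ok \<alpha> \<rho> a b L" and LG: "lagrangian_ok \<alpha> \<rho> a b g"
    and Cx: "C1d a b x x'" and xa: "x a = xa" and xb: "x b = xb" and gl: "functional \<alpha> \<rho> a b g x = l"
    and min: "\<exists>\<epsilon>>0. \<forall>y. C1_on a b y \<and> y a = xa \<and> y b = xb \<and> functional \<alpha> \<rho> a b g y = l
            \<and> frac_norm \<alpha> \<rho> a b (\<lambda>t. y t - x t) < \<epsilon>
            \<longrightarrow> functional \<alpha> \<rho> a b L x \<le> functional \<alpha> \<rho> a b L y"
    and C1: "C1d a b \<eta>1 \<eta>1'" "\<eta>1 a = 0" "\<eta>1 b = 0"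
    and C2: "C1d a b \<eta>2 \<eta>2'" "\<eta>2 a = 0" "\<eta>2 b = 0"
  shows "integral {a..b} (\<lambda>t. \<eta>1 t * ELx \<alpha> \<rho> a b L x t) * integral {a..b} (\<lambda>t. \<eta>2 t * ELx \<alpha> \<rho> a b g x t)
       - integral {a..b} (\<lambda>t. \<eta>2 t * ELx \<alpha> \<rho> a b L x t) * integral {a..b} (\<lambda>t. \<eta>1 t * ELx \<alpha> \<rho> a b g x t) = 0"
proof (rule ccontr)
  define A1 where "A1 = integral {a..b} (\<lambda>t. \<eta>1 t * ELx \<alpha> \<rho> a b L x t)"
  define A2 where "A2 = integral {a..b} (\<lambda>t. \<eta>2 t * ELx \<alpha> \<rho> a b L x t)"
  define B1 where "B1 = integral {a..b} (\<lambda>t. \<eta>1 t * ELx \<alpha> \<rho> a b g x t)"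
  define B2 where "B2 = integral {a..b} (\<lambda>t. \<eta>2 t * ELx \<alpha> \<rho> a b g x t)"
  assume "\<not> ?thesis"
  then have det: "A1 * B2 - A2 * B1 \<noteq> 0" unfolding A1_def A2_def B1_def B2_def .
  let ?D = "capD \<alpha> \<rho> a b"
  define U where "U = (\<lambda>(e::real\<times>real) t. x t + fst e * \<eta>1 t + snd e * \<eta>2 t)"
  define V where "V = (\<lambda>(e::real\<times>real) t. ?D x t + fst e * ?D \<eta>1 t + snd e * ?D \<eta>2 t)"
  define \<Psi> where "\<Psi> F e = integral {a..b} (\<lambda>t. F t (U e t) (V e t))" for F :: "real \<Rightarrow> real \<Rightarrow> real \<Rightarrow> real" and e
  have cx: "continuous_on {a..b} x" "continuous_on {a..b} \<eta>1" "continuous_on {a..b} \<eta>2"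
    using C1d_cont Cx C1 C2 by blast+
  have cD: "continuous_on {a..b} (?D x)" "continuous_on {a..b} (?D \<eta>1)" "continuous_on {a..b} (?D \<eta>2)"
    using capD_cont[OF ab p] Cx C1 C2 by blast+
  have PD: "(\<Psi> F has_derivative
     (\<lambda>h. fst h * integral {a..b} (\<lambda>t. partial2 F t (U e t) (V e t) * \<eta>1 t + partial3 F t (U e t) (V e t) * ?D \<eta>1 t)
        + snd h * integral {a..b} (\<lambda>t. partial2 F t (U e t) (V e t) * \<eta>2 t + partial3 F t (U e t) (V e t) * ?D \<eta>2 t))) (at e)"
    if "lagrangian_ok \<alpha> \<rho> a b F" for F e
  proof -
    note Lu = lagr_unpack[OF that]
    have "\<Psi> F = (\<lambda>e. integral {a..b} (\<lambda>t. F t (x t + fst e * \<eta>1 t + snd e * \<eta>2 t) (?D x t + fst e * ?D \<eta>1 t + snd e * ?D \<eta>2 t)))"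
      unfolding \<Psi>_def U_def V_def by simp
    moreover note psi_deriv[of a b F x "?D x" \<eta>1 \<eta>2 "?D \<eta>1" "?D \<eta>2" e, OF _ Lu(1-4) cx(1) cD(1) cx(2) cx(3) cD(2) cD(3)]
    ultimately show ?thesis using ab unfolding U_def V_def by simp
  qed
  have U0: "U 0 t = x t" and V0: "V 0 t = ?D x t" for t by (simp_all add: U_def V_def)
  have fvL: "integral {a..b} (\<lambda>t. partial2 L t (U 0 t) (V 0 t) * \<eta> t + partial3 L t (U 0 t) (V 0 t) * ?D \<eta> t)
      = integral {a..b} (\<lambda>t. \<eta> t * ELx \<alpha> \<rho> a b L x t)"
    if "C1d a b \<eta> \<eta>'" "\<eta> a = 0" "\<eta> b = 0" for \<eta> \<eta>'
    unfolding U0 V0 ELx_def using first_var[OF ab p LL Cx that] .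
  have fvG: "integral {a..b} (\<lambda>t. partial2 g t (U 0 t) (V 0 t) * \<eta> t + partial3 g t (U 0 t) (V 0 t) * ?D \<eta> t)
      = integral {a..b} (\<lambda>t. \<eta> t * ELx \<alpha> \<rho> a b g x t)"
    if "C1d a b \<eta> \<eta>'" "\<eta> a = 0" "\<eta> b = 0" for \<eta> \<eta>'
    unfolding U0 V0 ELx_def using first_var[OF ab p LG Cx that] .
  define \<Phi> where "\<Phi> e = (\<Psi> L e, \<Psi> g e)" for e
  define f' where "f' = (\<lambda>h::real\<times>real. (fst h * A1 + snd h * A2, fst h * B1 + snd h * B2))"
  have Phid: "(\<Phi> has_derivative f') (at 0)"
  proof -
    have e1: "integral {a..b} (\<lambda>t. partial2 L t (U 0 t) (V 0 t) * \<eta>1 t + partial3 L t (U 0 t) (V 0 t) * ?D \<eta>1 t) = A1"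
      unfolding A1_def using fvL[OF C1] .
    have e2: "integral {a..b} (\<lambda>t. partial2 L t (U 0 t) (V 0 t) * \<eta>2 t + partial3 L t (U 0 t) (V 0 t) * ?D \<eta>2 t) = A2"
      unfolding A2_def using fvL[OF C2] .
    have e3: "integral {a..b} (\<lambda>t. partial2 g t (U 0 t) (V 0 t) * \<eta>1 t + partial3 g t (U 0 t) (V 0 t) * ?D \<eta>1 t) = B1"
      unfolding B1_def using fvG[OF C1] .
    have e4: "integral {a..b} (\<lambda>t. partial2 g t (U 0 t) (V 0 t) * \<eta>2 t + partial3 g t (U 0 t) (V 0 t) * ?D \<eta>2 t) = B2"
      unfolding B2_def using fvG[OF C2] .
    from has_derivative_Pair[OF PD[OF LL, of 0] PD[OF LG, of 0]]
    show ?thesis unfolding e1 e2 e3 e4 \<Phi>_def[abs_def] f'_def .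
  qed
  have Phic: "continuous_on UNIV \<Phi>"
  proof -
    have "isCont \<Phi> e" for e
      using has_derivative_continuous[OF has_derivative_Pair[OF PD[OF LL, of e] PD[OF LG, of e]]]
      unfolding \<Phi>_def[abs_def] .
    then show ?thesis by (simp add: continuous_at_imp_continuous_on)
  qed
  define dt where "dt = A1 * B2 - A2 * B1"
  define g' where "g' = (\<lambda>w::real\<times>real. ((B2 * fst w - A2 * snd w) / dt, (A1 * snd w - B1 * fst w) / dt))"
  have bl: "bounded_linear g'"
    unfolding g'_def by (intro bounded_linear_Pair bl_aux)
  have inv: "f' \<circ> g' = id"
  proof
    fix w :: "real\<times>real"
    have "dt \<noteq> 0" using det unfolding dt_def .
    then show "(f' \<circ> g') w = id w"
    proof (cases w)
      case (Pair w1 w2)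
      have dt: "A1 * B2 - A2 * B1 \<noteq> 0" using \<open>dt \<noteq> 0\<close> unfolding dt_def .
      have n1: "(B2 * w1 - A2 * w2) * A1 + (A1 * w2 - B1 * w1) * A2 = dt * w1"
        unfolding dt_def by (simp add: algebra_simps)
      have "(B2 * w1 - A2 * w2) / dt * A1 + (A1 * w2 - B1 * w1) / dt * A2
          = ((B2 * w1 - A2 * w2) * A1 + (A1 * w2 - B1 * w1) * A2) / dt"
        by (simp add: add_divide_distrib)
      also have "\<dots> = w1" unfolding n1 using \<open>dt \<noteq> 0\<close> by simp
      finally have "(B2 * w1 - A2 * w2) / dt * A1 + (A1 * w2 - B1 * w1) / dt * A2 = w1" .
      moreover have "(B2 * w1 - A2 * w2) / dt * B1 + (A1 * w2 - B1 * w1) / dt * B2 = w2"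
      proof -
        have n2: "(B2 * w1 - A2 * w2) * B1 + (A1 * w2 - B1 * w1) * B2 = dt * w2"
          unfolding dt_def by (simp add: algebra_simps)
        have "(B2 * w1 - A2 * w2) / dt * B1 + (A1 * w2 - B1 * w1) / dt * B2
            = ((B2 * w1 - A2 * w2) * B1 + (A1 * w2 - B1 * w1) * B2) / dt"
          by (simp add: add_divide_distrib)
        also have "\<dots> = w2" unfolding n2 using \<open>dt \<noteq> 0\<close> by simp
        finally show ?thesis .
      qed
      ultimately show ?thesis using Pair unfolding f'_def g'_def by simp
    qed
  qed
  obtain \<epsilon>0 where \<epsilon>0: "\<epsilon>0 > 0" and minp: "\<And>y. C1_on a b y \<Longrightarrow> y a = xa \<Longrightarrow> y b = xb \<Longrightarrow> functional \<alpha> \<rho> a b g y = l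
            \<Longrightarrow> frac_norm \<alpha> \<rho> a b (\<lambda>t. y t - x t) < \<epsilon>0
            \<Longrightarrow> functional \<alpha> \<rho> a b L x \<le> functional \<alpha> \<rho> a b L y"
    using min by blast
  obtain N1 where N1: "N1 \<ge> 0" "\<And>t. t \<in> {a..b} \<Longrightarrow> \<bar>\<eta>1 t\<bar> \<le> N1" using cont_bound_compact[OF cx(2)] by blast
  obtain N2 where N2: "N2 \<ge> 0" "\<And>t. t \<in> {a..b} \<Longrightarrow> \<bar>\<eta>2 t\<bar> \<le> N2" using cont_bound_compact[OF cx(3)] by blast
  obtain N3 where N3: "N3 \<ge> 0" "\<And>t. t \<in> {a..b} \<Longrightarrow> \<bar>?D \<eta>1 t\<bar> \<le> N3" using cont_bound_compact[OF cD(2)] by blast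
  obtain N4 where N4: "N4 \<ge> 0" "\<And>t. t \<in> {a..b} \<Longrightarrow> \<bar>?D \<eta>2 t\<bar> \<le> N4" using cont_bound_compact[OF cD(3)] by blast
  define N where "N = N1 + N2 + N3 + N4"
  have N: "N \<ge> 0" "N1 \<le> N" "N2 \<le> N" "N3 \<le> N" "N4 \<le> N" using N1 N2 N3 N4 by (auto simp: N_def)
  define r where "r = \<epsilon>0 / (4 * N + 1)"
  have r: "r > 0" using \<epsilon>0 N by (simp add: r_def)
  have "\<Phi> 0 \<in> interior (\<Phi> ` ball 0 r)"
  proof (rule sussmann_open_mapping[OF open_UNIV Phic UNIV_I Phid bl inv])
    show "ball 0 r \<subseteq> UNIV" by simp
    show "0 \<in> interior (ball 0 r)" using r by (simp add: interior_open)
  qed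
  then obtain \<delta> where \<delta>: "\<delta> > 0" "ball (\<Phi> 0) \<delta> \<subseteq> \<Phi> ` ball 0 r" unfolding mem_interior by blast
  have "dist (\<Phi> 0) (\<Psi> L 0 - \<delta>/2, \<Psi> g 0) = sqrt ((\<delta>/2)^2)"
    unfolding \<Phi>_def dist_Pair_Pair dist_real_def by simp
  also have "\<dots> = \<delta>/2" using \<delta>(1) by simp
  finally have "(\<Psi> L 0 - \<delta>/2, \<Psi> g 0) \<in> ball (\<Phi> 0) \<delta>"
    using \<delta>(1) by (simp add: dist_commute)
  then have "(\<Psi> L 0 - \<delta>/2, \<Psi> g 0) \<in> \<Phi> ` ball 0 r" by (rule subsetD[OF \<delta>(2)])
  then obtain e where e: "e \<in> ball 0 r" "\<Phi> e = (\<Psi> L 0 - \<delta>/2, \<Psi> g 0)" by (metis imageE)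
  have ne: "norm e < r" using e by simp
  define w where "w t = fst e * \<eta>1 t + snd e * \<eta>2 t" for t
  define y where "y t = x t + fst e * \<eta>1 t + snd e * \<eta>2 t" for t
  have Cw: "C1d a b w (\<lambda>t. fst e * \<eta>1' t + snd e * \<eta>2' t)"
    unfolding w_def[abs_def] by (rule C1d_lin[OF C1(1) C2(1)])
  have yeq: "y = (\<lambda>t. 1 * x t + 1 * w t)" by (auto simp: y_def w_def fun_eq_iff)
  have Cy: "C1d a b y (\<lambda>t. 1 * x' t + 1 * (fst e * \<eta>1' t + snd e * \<eta>2' t))"
    unfolding yeq by (rule C1d_lin[OF Cx Cw])
  have capw: "?D w t = fst e * ?D \<eta>1 t + snd e * ?D \<eta>2 t" if "t \<in> {a..b}" for t
    unfolding w_def[abs_def] by (rule capD_lin[OF ab p C1(1) C2(1) that])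
  have capy: "?D y t = V e t" if "t \<in> {a..b}" for t
  proof -
    have "?D y t = 1 * ?D x t + 1 * ?D w t" unfolding yeq by (rule capD_lin[OF ab p Cx Cw that])
    then show ?thesis using capw[OF that] by (simp add: V_def)
  qed
  have funy: "functional \<alpha> \<rho> a b F y = \<Psi> F e" for F
    unfolding functional_def \<Psi>_def
    by (rule integral_cong) (simp add: capy U_def y_def)
  have fun0: "functional \<alpha> \<rho> a b F x = \<Psi> F 0" for F
    unfolding functional_def \<Psi>_def by (simp add: U0 V0)
  have gy: "functional \<alpha> \<rho> a b g y = l" using funy[of g] e(2) fun0[of g] gl by (simp add: \<Phi>_def)
  have Ly: "functional \<alpha> \<rho> a b L y = functional \<alpha> \<rho> a b L x - \<delta>/2"
    using funy[of L] e(2) fun0[of L] by (simp add: \<Phi>_def)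
  have ye: "y a = xa" "y b = xb" using xa xb C1 C2 by (simp_all add: y_def)
  have ywd: "(\<lambda>t. y t - x t) = w" by (auto simp: y_def w_def fun_eq_iff)
  have fe: "\<bar>fst e\<bar> \<le> norm e" "\<bar>snd e\<bar> \<le> norm e" using norm_fst_le'[of e] norm_snd_le'[of e] by auto
  have bw: "\<bar>w t\<bar> \<le> 2 * norm e * N" if "t \<in> {a..b}" for t
  proof -
    have "\<bar>w t\<bar> \<le> \<bar>fst e\<bar> * \<bar>\<eta>1 t\<bar> + \<bar>snd e\<bar> * \<bar>\<eta>2 t\<bar>" unfolding w_def by (simp add: abs_mult[symmetric] abs_triangle_ineq)
    also have "\<dots> \<le> norm e * N + norm e * N"
      using fe N1(2)[OF that] N2(2)[OF that] N by (intro add_mono mult_mono) auto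
    finally show ?thesis by (simp add: algebra_simps)
  qed
  have bDw: "\<bar>?D w t\<bar> \<le> 2 * norm e * N" if "t \<in> {a..b}" for t
  proof -
    have "\<bar>?D w t\<bar> \<le> \<bar>fst e\<bar> * \<bar>?D \<eta>1 t\<bar> + \<bar>snd e\<bar> * \<bar>?D \<eta>2 t\<bar>" unfolding capw[OF that] by (simp add: abs_mult[symmetric] abs_triangle_ineq)
    also have "\<dots> \<le> norm e * N + norm e * N"
      using fe N3(2)[OF that] N4(2)[OF that] N by (intro add_mono mult_mono) auto
    finally show ?thesis by (simp add: algebra_simps)
  qed
  have s1: "(SUP t\<in>{a..b}. \<bar>w t\<bar>) \<le> 2 * norm e * N"
    by (rule cSUP_least) (use ab bw in auto)
  have s2: "(SUP t\<in>{a..b}. \<bar>?D w t\<bar>) \<le> 2 * norm e * N"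
    by (rule cSUP_least) (use ab bDw in auto)
  have "frac_norm \<alpha> \<rho> a b w \<le> 2 * norm e * N + 2 * norm e * N"
    unfolding frac_norm_def using add_mono[OF s1 s2] .
  also have "\<dots> = 4 * N * norm e" by simp
  also have "\<dots> \<le> 4 * N * r" using ne N by (intro mult_left_mono) auto
  also have "\<dots> < \<epsilon>0" unfolding r_def using \<epsilon>0 N by (simp add: field_simps)
  finally have fn: "frac_norm \<alpha> \<rho> a b (\<lambda>t. y t - x t) < \<epsilon>0" unfolding ywd .
  have "C1_on a b y" using Cy C1_on_C1d by blast
  from minp[OF this ye gy fn] Ly \<delta>(1) show False by simp
qed



lemma ELx_cont:
  assumes ab: "0 < a" "a < b" and p: "0 < \<rho>" "0 < \<alpha>" "\<alpha> < 1"
    and LOK: "lagrangian_ok \<alpha> \<rho> a b F" and Cx: "C1d a b x x'"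
  shows "continuous_on {a..b} (ELx \<alpha> \<rho> a b F x)"
proof -
  note U = lagr_unpack[OF LOK]
  have cx: "continuous_on {a..b} x" using C1d_cont[OF Cx] .
  have cD: "continuous_on {a..b} (capD \<alpha> \<rho> a b x)" using capD_cont[OF ab p Cx] .
  have cP2: "continuous_on {a..b} (\<lambda>t. partial2 F t (x t) (capD \<alpha> \<rho> a b x t))" using comp_cont_t[OF U(3) cx cD] .
  have rd: "rightD_exists_cont \<alpha> \<rho> a b (\<lambda>t. partial3 F t (x t) (capD \<alpha> \<rho> a b x t))"
    using U(5)[of x] Cx C1_on_C1d by blast
  then have crd: "continuous_on {a..b} (rightD \<alpha> \<rho> a b (\<lambda>t. partial3 F t (x t) (capD \<alpha> \<rho> a b x t)))"
    unfolding rightD_exists_cont_def by auto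
  show ?thesis unfolding ELx_def[abs_def] using cP2 crd by (intro continuous_intros)
qed

theorem mainTheorem8:
  fixes a b \<alpha> \<rho> xa xb l :: real
    and L g :: "real \<Rightarrow> real \<Rightarrow> real \<Rightarrow> real"
    and x :: "real \<Rightarrow> real"
  assumes "0 < a" "a < b" "0 < \<alpha>" "\<alpha> < 1" "0 < \<rho>"
    and "lagrangian_ok \<alpha> \<rho> a b L" "lagrangian_ok \<alpha> \<rho> a b g"
    and "C1_on a b x" "x a = xa" "x b = xb" "functional \<alpha> \<rho> a b g x = l"
    and "\<exists>\<epsilon>>0. \<forall>y. C1_on a b y \<and> y a = xa \<and> y b = xb \<and> functional \<alpha> \<rho> a b g y = l
            \<and> frac_norm \<alpha> \<rho> a b (\<lambda>t. y t - x t) < \<epsilon>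
            \<longrightarrow> functional \<alpha> \<rho> a b L x \<le> functional \<alpha> \<rho> a b L y"
    and "\<not> euler_lagrange \<alpha> \<rho> a b g x"
  shows "\<exists>lam::real. euler_lagrange \<alpha> \<rho> a b (\<lambda>t u v. L t u v + lam * g t u v) x"
proof -
  note ab = assms(1,2) and p = assms(5,3,4)
  note LL = assms(6) and LG = assms(7)
  obtain x' where Cx: "C1d a b x x'" using assms(8) C1_on_C1d by blast
  have cEL: "continuous_on {a..b} (ELx \<alpha> \<rho> a b L x)" by (rule ELx_cont[OF ab p LL Cx])
  have cEG: "continuous_on {a..b} (ELx \<alpha> \<rho> a b g x)" by (rule ELx_cont[OF ab p LG Cx])
  obtain t0 where t0: "t0 \<in> {a..b}" "ELx \<alpha> \<rho> a b g x t0 \<noteq> 0"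
    using assms(13) unfolding euler_lagrange_def ELx_def by blast
  obtain \<eta>2 \<eta>2' where C2: "C1d a b \<eta>2 \<eta>2'" "\<eta>2 a = 0" "\<eta>2 b = 0"
    and B2: "integral {a..b} (\<lambda>t. \<eta>2 t * ELx \<alpha> \<rho> a b g x t) \<noteq> 0"
    using bump_exists[OF ab(2) cEG t0] by blast
  define A2 where "A2 = integral {a..b} (\<lambda>t. \<eta>2 t * ELx \<alpha> \<rho> a b L x t)"
  define B2' where "B2' = integral {a..b} (\<lambda>t. \<eta>2 t * ELx \<alpha> \<rho> a b g x t)"
  define lam where "lam = - A2 / B2'"
  have B2ne: "B2' \<noteq> 0" using B2 unfolding B2'_def .
  have zero: "ELx \<alpha> \<rho> a b L x t + lam * ELx \<alpha> \<rho> a b g x t = 0" if t: "t \<in> {a..b}" for t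
  proof (rule ccontr)
    assume ne: "ELx \<alpha> \<rho> a b L x t + lam * ELx \<alpha> \<rho> a b g x t \<noteq> 0"
    have cE: "continuous_on {a..b} (\<lambda>t. ELx \<alpha> \<rho> a b L x t + lam * ELx \<alpha> \<rho> a b g x t)"
      using cEL cEG by (intro continuous_intros)
    obtain \<eta>1 \<eta>1' where C1: "C1d a b \<eta>1 \<eta>1'" "\<eta>1 a = 0" "\<eta>1 b = 0"
      and I: "integral {a..b} (\<lambda>s. \<eta>1 s * (ELx \<alpha> \<rho> a b L x s + lam * ELx \<alpha> \<rho> a b g x s)) \<noteq> 0"
      using bump_exists[OF ab(2) cE t ne] by blast
    define A1 where "A1 = integral {a..b} (\<lambda>t. \<eta>1 t * ELx \<alpha> \<rho> a b L x t)"
    define B1 where "B1 = integral {a..b} (\<lambda>t. \<eta>1 t * ELx \<alpha> \<rho> a b g x t)"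
    have det: "A1 * B2' - A2 * B1 = 0"
      using det_zero[OF ab p LL LG Cx assms(9,10,11,12) C1 C2]
      unfolding A1_def A2_def B1_def B2'_def .
    have ce1: "continuous_on {a..b} \<eta>1" using C1d_cont[OF C1(1)] .
    have i1: "(\<lambda>t. \<eta>1 t * ELx \<alpha> \<rho> a b L x t) integrable_on {a..b}"
      using ce1 cEL by (intro integrable_continuous_real continuous_intros)
    have i2: "(\<lambda>t. lam * (\<eta>1 t * ELx \<alpha> \<rho> a b g x t)) integrable_on {a..b}"
      using ce1 cEG by (intro integrable_continuous_real continuous_intros)
    have "integral {a..b} (\<lambda>s. \<eta>1 s * (ELx \<alpha> \<rho> a b L x s + lam * ELx \<alpha> \<rho> a b g x s))
        = integral {a..b} (\<lambda>s. \<eta>1 s * ELx \<alpha> \<rho> a b L x s + lam * (\<eta>1 s * ELx \<alpha> \<rho> a b g x s))"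
      by (simp add: algebra_simps)
    also have "\<dots> = A1 + lam * B1" unfolding A1_def B1_def using integral_add[OF i1 i2] by simp
    also have "\<dots> = (A1 * B2' - A2 * B1) / B2'" unfolding lam_def using B2ne by (simp add: field_simps)
    also have "\<dots> = 0" using det by simp
    finally show False using I by simp
  qed
  show ?thesis
  proof (intro exI[of _ lam])
    note UL = lagr_unpack[OF LL] and UG = lagr_unpack[OF LG]
    let ?D = "capD \<alpha> \<rho> a b x"
    have cx: "continuous_on {a..b} x" using C1d_cont[OF Cx] .
    have cD: "continuous_on {a..b} ?D" using capD_cont[OF ab p Cx] .
    have C1x: "C1_on a b x" using assms(8) .
    show "euler_lagrange \<alpha> \<rho> a b (\<lambda>t u v. L t u v + lam * g t u v) x"
      unfolding euler_lagrange_def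
    proof
      fix t assume t: "t \<in> {a..b}"
      have pc: "partial2 (\<lambda>t u v. L t u v + lam * g t u v) s u v = partial2 L s u v + lam * partial2 g s u v"
           "partial3 (\<lambda>t u v. L t u v + lam * g t u v) s u v = partial3 L s u v + lam * partial3 g s u v"
        if "s \<in> {a..b}" for s u v
        using partial_comb[of L s v u g lam] UL(2) UG(2) that by auto
      have rl: "rightD \<alpha> \<rho> a b (\<lambda>s. partial3 (\<lambda>t u v. L t u v + lam * g t u v) s (x s) (?D s)) t
          = rightD \<alpha> \<rho> a b (\<lambda>s. partial3 L s (x s) (?D s)) t + lam * rightD \<alpha> \<rho> a b (\<lambda>s. partial3 g s (x s) (?D s)) t"
        by (rule rightD_lin[OF ab p comp_cont_t[OF UL(4) cx cD] comp_cont_t[OF UG(4) cx cD] UL(5)[OF C1x] UG(5)[OF C1x] t])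
           (simp add: pc)
      show "partial2 (\<lambda>t u v. L t u v + lam * g t u v) t (x t) (?D t)
          - rightD \<alpha> \<rho> a b (\<lambda>s. partial3 (\<lambda>t u v. L t u v + lam * g t u v) s (x s) (?D s)) t = 0"
        using zero[OF t] unfolding rl pc(1)[OF t] ELx_def by (simp add: algebra_simps)
    qed
  qed
qed



end
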